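(* For each $\otimes\in\{\mathrm{del},\mathrm{add},\mathrm{edit}\}$, $p\text{-}\textsc{RM}^{\otimes}_{\mathrm{basic}}(ae)\subseteq\mathrm{para}\text{-}\mathrm{AC}^0\subseteq\mathrm{para}\text{-}\mathrm{AC}^{0\uparrow}$.
   Context: A basic graph is $(V,E)$ with $E\subseteq V\times V$ symmetric and irreflexive. For $S\subseteq V\times V$, $\|S\|=|\{\{u,v\}:(u,v)\in S\}|$. For a first-order sentence $\phi$ over $\{E\}$, $p\text{-}\textsc{RM}^{\mathrm{edit}}_{\mathrm{basic}}(\phi)$: given a basic graph $(V,E)$ and parameter $k$, is there $S$ with $\|S\|\le k$ such that $(V,E\triangle S)$ is a basic graph satisfying $\phi$; del (resp. add) versions require $S\subseteq E$ (resp. $S\cap E=\emptyset$). $p\text{-}\textsc{RM}^{\otimes}_{\mathrm{basic}}(ae)$ is the class of these problems for sentences $\phi=\forall x\exists y\,\psi$ with $\psi$ quantifier-free. $\mathrm{para}\text{-}\mathrm{AC}^{0}$ (resp. $\mathrm{para}\text{-}\mathrm{AC}^{0\uparrow}$): parameterized problems decided by unbounded fan-in and/or/not circuit families $(C_{n,k})$ of size $f(k)n^{O(1)}$ and depth $O(1)$ (resp. $f(k)$), $f$ computable. *)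

theory Defs
  imports Main
begin

datatype recf = RZero | RSucc | RProj nat | RComp recf "recf list"
  | RPrim recf recf | RMu recf

inductive reval :: "recf \<Rightarrow> nat list \<Rightarrow> nat \<Rightarrow> bool" where
  zero: "reval RZero xs 0"
| succ: "reval RSucc (x # xs) (Suc x)"
| proj: "i < length xs \<Longrightarrow> reval (RProj i) xs (xs ! i)"
| comp: "list_all2 (\<lambda>g y. reval g xs y) gs ys \<Longrightarrow> reval f ys z \<Longrightarrow> reval (RComp f gs) xs z"
| prim0: "reval g xs y \<Longrightarrow> reval (RPrim g h) (0 # xs) y"
| primS: "reval (RPrim g h) (n # xs) y \<Longrightarrow> reval h (n # y # xs) z
          \<Longrightarrow> reval (RPrim g h) (Suc n # xs) z"
| mu: "reval f (n # xs) 0 \<Longrightarrow> (\<forall>m<n. \<exists>y. reval f (m # xs) (Suc y))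
       \<Longrightarrow> reval (RMu f) xs n"

definition computable :: "(nat \<Rightarrow> nat) \<Rightarrow> bool" where
  "computable f \<longleftrightarrow> (\<exists>r. \<forall>n. reval r [n] (f n))"

text \<open>A circuit is a list of gates in topological order; a gate may only refer to
  input bits (GIn) or to earlier gates.  The output gate is the last gate.\<close>

datatype gate = GIn nat | GNot nat | GAnd "nat list" | GOr "nat list"

fun gate_ok :: "nat \<Rightarrow> nat \<Rightarrow> gate \<Rightarrow> bool" where
  "gate_ok m i (GIn j) = (j < m)"
| "gate_ok m i (GNot j) = (j < i)"
| "gate_ok m i (GAnd js) = (\<forall>j\<in>set js. j < i)"
| "gate_ok m i (GOr js) = (\<forall>j\<in>set js. j < i)"

definition wf_circ :: "nat \<Rightarrow> gate list \<Rightarrow> bool" where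
  "wf_circ m C \<longleftrightarrow> C \<noteq> [] \<and> (\<forall>i<length C. gate_ok m i (C ! i))"

fun gval :: "bool list \<Rightarrow> bool list \<Rightarrow> gate \<Rightarrow> bool" where
  "gval w vs (GIn j) = w ! j"
| "gval w vs (GNot j) = (\<not> vs ! j)"
| "gval w vs (GAnd js) = (\<forall>j\<in>set js. vs ! j)"
| "gval w vs (GOr js) = (\<exists>j\<in>set js. vs ! j)"

definition circ_vals :: "bool list \<Rightarrow> gate list \<Rightarrow> bool list" where
  "circ_vals w C = foldl (\<lambda>vs g. vs @ [gval w vs g]) [] C"

definition circ_out :: "bool list \<Rightarrow> gate list \<Rightarrow> bool" where
  "circ_out w C = last (circ_vals w C)"

fun gdepth :: "nat list \<Rightarrow> gate \<Rightarrow> nat" where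
  "gdepth ds (GIn j) = 0"
| "gdepth ds (GNot j) = Suc (ds ! j)"
| "gdepth ds (GAnd js) = Suc (fold max (map (\<lambda>j. ds ! j) js) 0)"
| "gdepth ds (GOr js) = Suc (fold max (map (\<lambda>j. ds ! j) js) 0)"

definition circ_depth :: "gate list \<Rightarrow> nat" where
  "circ_depth C = fold max (foldl (\<lambda>ds g. ds @ [gdepth ds g]) [] C) 0"

definition circ_size :: "gate list \<Rightarrow> nat" where
  "circ_size C = length C"

type_synonym pproblem = "(bool list \<times> nat) set"

definition decides_family :: "(nat \<Rightarrow> nat \<Rightarrow> gate list) \<Rightarrow> pproblem \<Rightarrow> bool" where
  "decides_family C Q \<longleftrightarrow> (\<forall>n k. wf_circ n (C n k) \<and>
      (\<forall>w. length w = n \<longrightarrow> (circ_out w (C n k) \<longleftrightarrow> (w, k) \<in> Q)))"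

definition paraAC0 :: "pproblem set" where
  "paraAC0 = {Q. \<exists>C f (c::nat) (d::nat). computable f \<and> decides_family C Q \<and>
      (\<forall>n k. circ_size (C n k) \<le> f k * (n + 1) ^ c \<and> circ_depth (C n k) \<le> d)}"

definition paraAC0up :: "pproblem set" where
  "paraAC0up = {Q. \<exists>C f (c::nat) g. computable f \<and> computable g \<and> decides_family C Q \<and>
      (\<forall>n k. circ_size (C n k) \<le> f k * (n + 1) ^ c \<and> circ_depth (C n k) \<le> g k)}"

datatype fo = FEq nat nat | FE nat nat | FNot fo | FAnd fo fo | FOr fo fo
  | FAll nat fo | FEx nat fo

fun qfree :: "fo \<Rightarrow> bool" where
  "qfree (FEq x y) = True"
| "qfree (FE x y) = True"
| "qfree (FNot p) = qfree p"
| "qfree (FAnd p q) = (qfree p \<and> qfree q)"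
| "qfree (FOr p q) = (qfree p \<and> qfree q)"
| "qfree (FAll x p) = False"
| "qfree (FEx x p) = False"

fun fv :: "fo \<Rightarrow> nat set" where
  "fv (FEq x y) = {x, y}"
| "fv (FE x y) = {x, y}"
| "fv (FNot p) = fv p"
| "fv (FAnd p q) = fv p \<union> fv q"
| "fv (FOr p q) = fv p \<union> fv q"
| "fv (FAll x p) = fv p - {x}"
| "fv (FEx x p) = fv p - {x}"

fun holds :: "nat \<Rightarrow> (nat \<times> nat) set \<Rightarrow> (nat \<Rightarrow> nat) \<Rightarrow> fo \<Rightarrow> bool" where
  "holds n E a (FEq x y) = (a x = a y)"
| "holds n E a (FE x y) = ((a x, a y) \<in> E)"
| "holds n E a (FNot p) = (\<not> holds n E a p)"
| "holds n E a (FAnd p q) = (holds n E a p \<and> holds n E a q)"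
| "holds n E a (FOr p q) = (holds n E a p \<or> holds n E a q)"
| "holds n E a (FAll x p) = (\<forall>v<n. holds n E (a(x := v)) p)"
| "holds n E a (FEx x p) = (\<exists>v<n. holds n E (a(x := v)) p)"

definition models :: "nat \<Rightarrow> (nat \<times> nat) set \<Rightarrow> fo \<Rightarrow> bool" where
  "models n E \<phi> = holds n E (\<lambda>_. 0) \<phi>"

definition ae_sentence :: "fo \<Rightarrow> bool" where
  "ae_sentence \<phi> \<longleftrightarrow> (\<exists>x y \<psi>. \<phi> = FAll x (FEx y \<psi>) \<and> qfree \<psi> \<and> fv \<phi> = {})"

definition basic_graph :: "nat \<Rightarrow> (nat \<times> nat) set \<Rightarrow> bool" where
  "basic_graph n E \<longleftrightarrow> E \<subseteq> {0..<n} \<times> {0..<n} \<and> sym E \<and> irrefl E"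

definition enorm :: "(nat \<times> nat) set \<Rightarrow> nat" where
  "enorm S = card {{u, v} | u v. (u, v) \<in> S}"

text \<open>Adjacency-matrix encoding of the graph with vertex set {0..<n} as a bit string
  of length n*n (row-major).\<close>
definition graph_enc :: "nat \<Rightarrow> (nat \<times> nat) set \<Rightarrow> bool list" where
  "graph_enc n E = concat (map (\<lambda>i. map (\<lambda>j. (i, j) \<in> E) [0..<n]) [0..<n])"

datatype modop = Del | Add | Edit

definition op_ok :: "modop \<Rightarrow> (nat \<times> nat) set \<Rightarrow> (nat \<times> nat) set \<Rightarrow> bool" where
  "op_ok m E S = (case m of Del \<Rightarrow> S \<subseteq> E | Add \<Rightarrow> S \<inter> E = {} | Edit \<Rightarrow> True)"

definition RM_basic :: "modop \<Rightarrow> fo \<Rightarrow> pproblem" where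
  "RM_basic m \<phi> = {(graph_enc n E, k) | n E k. basic_graph n E \<and>
     (\<exists>S. S \<subseteq> {0..<n} \<times> {0..<n} \<and> enorm S \<le> k \<and> op_ok m E S \<and>
          basic_graph n (E - S \<union> (S - E)) \<and> models n (E - S \<union> (S - E)) \<phi>)}"

definition RM_basic_ae :: "modop \<Rightarrow> pproblem set" where
  "RM_basic_ae m = {RM_basic m \<phi> | \<phi>. ae_sentence \<phi>}"

end

theory Submission
  imports Defs Complex_Main
begin

datatype ftree = TIn nat | TNot ftree | TAnd "ftree list" | TOr "ftree list"

fun teval :: "bool list \<Rightarrow> ftree \<Rightarrow> bool" where
  "teval w (TIn j) = w ! j"
| "teval w (TNot t) = (\<not> teval w t)"
| "teval w (TAnd ts) = (\<forall>t\<in>set ts. teval w t)"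
| "teval w (TOr ts) = (\<exists>t\<in>set ts. teval w t)"

fun tsize :: "ftree \<Rightarrow> nat" where
  "tsize (TIn j) = 1"
| "tsize (TNot t) = Suc (tsize t)"
| "tsize (TAnd ts) = Suc (sum_list (map tsize ts))"
| "tsize (TOr ts) = Suc (sum_list (map tsize ts))"

fun tdepth :: "ftree \<Rightarrow> nat" where
  "tdepth (TIn j) = 0"
| "tdepth (TNot t) = Suc (tdepth t)"
| "tdepth (TAnd ts) = Suc (fold max (map tdepth ts) 0)"
| "tdepth (TOr ts) = Suc (fold max (map tdepth ts) 0)"

fun tins :: "ftree \<Rightarrow> nat set" where
  "tins (TIn j) = {j}"
| "tins (TNot t) = tins t"
| "tins (TAnd ts) = (\<Union>t\<in>set ts. tins t)"
| "tins (TOr ts) = (\<Union>t\<in>set ts. tins t)"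

fun tcomp :: "nat \<Rightarrow> ftree \<Rightarrow> gate list"
and tcomps :: "nat \<Rightarrow> ftree list \<Rightarrow> gate list \<times> nat list" where
  "tcomp b (TIn j) = [GIn j]"
| "tcomp b (TNot t) = tcomp b t @ [GNot (b + length (tcomp b t) - 1)]"
| "tcomp b (TAnd ts) = fst (tcomps b ts) @ [GAnd (snd (tcomps b ts))]"
| "tcomp b (TOr ts) = fst (tcomps b ts) @ [GOr (snd (tcomps b ts))]"
| "tcomps b [] = ([], [])"
| "tcomps b (t # ts) = (tcomp b t @ fst (tcomps (b + length (tcomp b t)) ts),
     (b + length (tcomp b t) - 1) # snd (tcomps (b + length (tcomp b t)) ts))"

lemma comp_len:
  "length (tcomp b t) = tsize t"
  "length (fst (tcomps b ts)) = sum_list (map tsize ts) \<and> length (snd (tcomps b ts)) = length ts"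
  by (induction b t and b ts rule: tcomp_tcomps.induct) auto

lemma tsize_pos: "tsize t \<ge> 1" by (cases t) auto

lemma comp_ne: "tcomp b t \<noteq> []"
  using comp_len(1)[of b t] tsize_pos[of t] by auto

lemma comp_pos: "0 < length (tcomp b t)"
  using comp_ne[of b t] by simp

lemma nth_last_app: "X \<noteq> [] \<Longrightarrow> (vs @ X) ! (length vs + length X - 1) = last X"
  by (cases X rule: rev_cases) (auto simp: nth_append)

definition step :: "bool list \<Rightarrow> bool list \<Rightarrow> gate \<Rightarrow> bool list" where
  "step w vs g = vs @ [gval w vs g]"

lemma foldl_step_app: "\<exists>X. foldl (step w) vs C = vs @ X \<and> length X = length C"
proof (induction C arbitrary: vs)
  case Nil then show ?case by simp
next
  case (Cons g C)
  from Cons[of "vs @ [gval w vs g]"] show ?case by (auto simp: step_def)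
qed

lemma la2_all: "list_all2 (\<lambda>p t. f p = g t) ps ts \<Longrightarrow> (\<forall>p\<in>set ps. f p) = (\<forall>t\<in>set ts. g t)"
  by (induction rule: list_all2_induct) auto
lemma la2_ex: "list_all2 (\<lambda>p t. f p = g t) ps ts \<Longrightarrow> (\<exists>p\<in>set ps. f p) = (\<exists>t\<in>set ts. g t)"
  by (induction rule: list_all2_induct) auto

lemma comp_eval:
  "length vs = b \<Longrightarrow> \<exists>X. foldl (step w) vs (tcomp b t) = vs @ X \<and> length X = length (tcomp b t)
      \<and> last X = teval w t"
  "length vs = b \<Longrightarrow> \<exists>X. foldl (step w) vs (fst (tcomps b ts)) = vs @ X \<and> length X = length (fst (tcomps b ts))
      \<and> list_all2 (\<lambda>p t. p < b + length X \<and> (vs @ X) ! p = teval w t) (snd (tcomps b ts)) ts"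
proof (induction b t and b ts arbitrary: vs and vs rule: tcomp_tcomps.induct)
  case (1 b j)
  then show ?case by (simp add: step_def)
next
  case (2 b t)
  from "2.IH"(1)[OF "2.prems"] obtain X where X: "foldl (step w) vs (tcomp b t) = vs @ X"
    "length X = length (tcomp b t)" "last X = teval w t" by blast
  have ne: "X \<noteq> []" using X(2) comp_ne by auto
  have e: "(vs @ X) ! (b + length (tcomp b t) - 1) = last X"
    using nth_last_app[OF ne, of vs] unfolding X(2) "2.prems" .
  have "foldl (step w) vs (tcomp b (TNot t)) = (vs @ X) @ [\<not> last X]"
    by (simp only: tcomp.simps foldl_append X(1) foldl_Cons foldl_Nil step_def gval.simps e)
  then show ?case using X by simp
next
  case (3 b ts)
  from "3.IH"(1)[OF "3.prems"] obtain X where X: "foldl (step w) vs (fst (tcomps b ts)) = vs @ X"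
    "length X = length (fst (tcomps b ts))"
    "list_all2 (\<lambda>p t. p < b + length X \<and> (vs @ X) ! p = teval w t) (snd (tcomps b ts)) ts" by blast
  have "list_all2 (\<lambda>p t. (vs @ X) ! p = teval w t) (snd (tcomps b ts)) ts"
    using X(3) by (rule list_all2_mono) auto
  from la2_all[OF this] have e: "gval w (vs @ X) (GAnd (snd (tcomps b ts))) = teval w (TAnd ts)" by simp
  have "foldl (step w) vs (tcomp b (TAnd ts)) = (vs @ X) @ [teval w (TAnd ts)]"
    by (simp only: tcomp.simps foldl_append X(1)) (simp only: step_def e foldl_Cons foldl_Nil)
  then show ?case using X by simp
next
  case (4 b ts)
  from "4.IH"(1)[OF "4.prems"] obtain X where X: "foldl (step w) vs (fst (tcomps b ts)) = vs @ X"
    "length X = length (fst (tcomps b ts))"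
    "list_all2 (\<lambda>p t. p < b + length X \<and> (vs @ X) ! p = teval w t) (snd (tcomps b ts)) ts" by blast
  have "list_all2 (\<lambda>p t. (vs @ X) ! p = teval w t) (snd (tcomps b ts)) ts"
    using X(3) by (rule list_all2_mono) auto
  from la2_ex[OF this] have e: "gval w (vs @ X) (GOr (snd (tcomps b ts))) = teval w (TOr ts)" by simp
  have "foldl (step w) vs (tcomp b (TOr ts)) = (vs @ X) @ [teval w (TOr ts)]"
    by (simp only: tcomp.simps foldl_append X(1)) (simp only: step_def e foldl_Cons foldl_Nil)
  then show ?case using X by simp
next
  case (5 b)
  then show ?case by simp
next
  case (6 b t ts)
  from "6.IH"(1)[OF "6.prems"] obtain X1 where X1: "foldl (step w) vs (tcomp b t) = vs @ X1"
    "length X1 = length (tcomp b t)" "last X1 = teval w t" by blast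
  have l1: "length (vs @ X1) = b + length (tcomp b t)" using X1 "6.prems" by simp
  obtain X2 where X2: "foldl (step w) (vs @ X1) (fst (tcomps (b + length (tcomp b t)) ts)) = (vs @ X1) @ X2"
    "length X2 = length (fst (tcomps (b + length (tcomp b t)) ts))"
    "list_all2 (\<lambda>p u. p < b + length (tcomp b t) + length X2 \<and> ((vs @ X1) @ X2) ! p = teval w u)
       (snd (tcomps (b + length (tcomp b t)) ts)) ts"
    using "6.IH"(3)[OF l1] by blast
  have ne: "X1 \<noteq> []" using X1(2) comp_ne by auto
  have v1: "(vs @ X1) ! (b + length (tcomp b t) - 1) = teval w t"
    using nth_last_app[OF ne, of vs] unfolding X1(2,3) "6.prems" .
  have lt: "b + length (tcomp b t) - 1 < length (vs @ X1)" using l1 comp_pos[of b t] by simp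
  have v0: "((vs @ X1) @ X2) ! (b + length (tcomp b t) - 1) = teval w t"
    using v1 lt by (simp only: nth_append) simp
  have f: "foldl (step w) vs (fst (tcomps b (t # ts))) = (vs @ X1) @ X2"
    by (simp add: X1(1) X2(1))
  have L: "b + length (X1 @ X2) = b + length (tcomp b t) + length X2" using X1(2) by simp
  have r: "list_all2 (\<lambda>p t. p < b + length (X1 @ X2) \<and> (vs @ X1 @ X2) ! p = teval w t)
       (snd (tcomps (b + length (tcomp b t)) ts)) ts"
    using X2(3) unfolding L by simp
  have h: "b + length (tcomp b t) - 1 < b + length (X1 @ X2) \<and> (vs @ X1 @ X2) ! (b + length (tcomp b t) - 1) = teval w t"
    using v0 lt "6.prems" by simp
  have "list_all2 (\<lambda>p t. p < b + length (X1 @ X2) \<and> (vs @ X1 @ X2) ! p = teval w t)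
       (snd (tcomps b (t # ts))) (t # ts)"
    using h r by (simp only: tcomps.simps snd_conv list_all2_Cons)
  moreover have "length (X1 @ X2) = length (fst (tcomps b (t # ts)))"
    using X1(2) X2(2) by simp
  moreover have "foldl (step w) vs (fst (tcomps b (t # ts))) = vs @ (X1 @ X2)" using f by simp
  ultimately show ?case by (intro exI[of _ "X1 @ X2"] conjI)
qed

definition okl :: "nat \<Rightarrow> nat \<Rightarrow> gate list \<Rightarrow> bool" where
  "okl m b C = (\<forall>i<length C. gate_ok m (b + i) (C ! i))"

lemma okl_append: "okl m b (A @ B) = (okl m b A \<and> okl m (b + length A) B)"
proof
  assume h: "okl m b (A @ B)"
  have 1: "okl m b A" unfolding okl_def
  proof (intro allI impI)
    fix i assume "i < length A"
    then show "gate_ok m (b + i) (A ! i)" using h[unfolded okl_def, rule_format, of i] by (simp add: nth_append)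
  qed
  have 2: "okl m (b + length A) B" unfolding okl_def
  proof (intro allI impI)
    fix i assume "i < length B"
    then show "gate_ok m (b + length A + i) (B ! i)" using h[unfolded okl_def, rule_format, of "length A + i"]
      by (simp add: nth_append add.assoc)
  qed
  show "okl m b A \<and> okl m (b + length A) B" using 1 2 by simp
next
  assume h: "okl m b A \<and> okl m (b + length A) B"
  show "okl m b (A @ B)" unfolding okl_def
  proof (intro allI impI)
    fix i assume i: "i < length (A @ B)"
    show "gate_ok m (b + i) ((A @ B) ! i)"
    proof (cases "i < length A")
      case True then show ?thesis using h unfolding okl_def by (simp add: nth_append)
    next
      case False
      then obtain j where j: "i = length A + j" by (metis le_add_diff_inverse not_less)
      then have "j < length B" using i by simp
      then show ?thesis using h unfolding okl_def j by (simp add: nth_append add.assoc)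
    qed
  qed
qed

lemma okl_single: "okl m b [g] = gate_ok m b g"
  by (simp add: okl_def)

lemma comp_ok:
  "(\<forall>j\<in>tins t. j < m) \<Longrightarrow> okl m b (tcomp b t)"
  "(\<forall>t\<in>set ts. \<forall>j\<in>tins t. j < m) \<Longrightarrow> okl m b (fst (tcomps b ts)) \<and>
     (\<forall>p\<in>set (snd (tcomps b ts)). p < b + length (fst (tcomps b ts)))"
proof (induction b t and b ts rule: tcomp_tcomps.induct)
  case (1 b j)
  then show ?case by (simp add: okl_def)
next
  case (2 b t)
  have "okl m b (tcomp b t)" using "2.IH"(1) "2.prems" by simp
  moreover have "gate_ok m (b + length (tcomp b t)) (GNot (b + length (tcomp b t) - 1))"
    using comp_pos[of b t] by simp
  ultimately show ?case by (simp only: tcomp.simps okl_append okl_single; simp)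
next
  case (3 b ts)
  have "okl m b (fst (tcomps b ts)) \<and> (\<forall>p\<in>set (snd (tcomps b ts)). p < b + length (fst (tcomps b ts)))"
    using "3.IH"(1) "3.prems" by simp
  then show ?case by (simp only: tcomp.simps okl_append okl_single; simp)
next
  case (4 b ts)
  have "okl m b (fst (tcomps b ts)) \<and> (\<forall>p\<in>set (snd (tcomps b ts)). p < b + length (fst (tcomps b ts)))"
    using "4.IH"(1) "4.prems" by simp
  then show ?case by (simp only: tcomp.simps okl_append okl_single; simp)
next
  case (5 b)
  then show ?case by (simp add: okl_def)
next
  case (6 b t ts)
  have a: "okl m b (tcomp b t)" using "6.IH"(1) "6.prems" by simp
  have c: "okl m (b + length (tcomp b t)) (fst (tcomps (b + length (tcomp b t)) ts)) \<and>
     (\<forall>p\<in>set (snd (tcomps (b + length (tcomp b t)) ts)). p < b + length (tcomp b t) + length (fst (tcomps (b + length (tcomp b t)) ts)))"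
    using "6.IH"(3) "6.prems" by simp
  have "b + length (tcomp b t) - 1 < b + length (tcomp b t)" using comp_pos[of b t] by simp
  then show ?case using a c by (simp add: okl_append add.assoc)
qed

definition dstep :: "nat list \<Rightarrow> gate \<Rightarrow> nat list" where
  "dstep ds g = ds @ [gdepth ds g]"

lemma fold_max_le: "fold max xs (a::nat) \<le> b \<longleftrightarrow> a \<le> b \<and> (\<forall>x\<in>set xs. x \<le> b)"
  by (induction xs arbitrary: a) auto

lemma fold_max_init: "a \<le> fold max xs (a::nat)"
  by (metis fold_max_le order_refl)

lemma fold_max_ge: "x \<in> set xs \<Longrightarrow> x \<le> fold max xs (a::nat)"
  by (metis fold_max_le order_refl)

lemma la2_le_max:
  assumes "list_all2 (\<lambda>p t. f p \<le> tdepth t) ps ts"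
  shows "\<forall>p\<in>set ps. f p \<le> fold max (map tdepth ts) 0"
  using assms
proof (induction rule: list_all2_induct)
  case Nil then show ?case by simp
next
  case (Cons p ps t ts)
  have "tdepth t \<le> fold max (map tdepth (t # ts)) 0" by (simp add: fold_max_ge fold_max_init)
  moreover have "fold max (map tdepth ts) 0 \<le> fold max (map tdepth (t # ts)) 0"
    by (simp add: fold_max_le fold_max_ge fold_max_init)
  ultimately show ?case using Cons by (auto intro: order_trans)
qed

lemma comp_depth:
  "length ds = b \<Longrightarrow> \<exists>Y. foldl dstep ds (tcomp b t) = ds @ Y \<and> length Y = length (tcomp b t)
      \<and> (\<forall>y\<in>set Y. y \<le> tdepth t)"
  "length ds = b \<Longrightarrow> \<exists>Y. foldl dstep ds (fst (tcomps b ts)) = ds @ Y \<and> length Y = length (fst (tcomps b ts))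
      \<and> (\<forall>y\<in>set Y. y \<le> fold max (map tdepth ts) 0)
      \<and> list_all2 (\<lambda>p t. p < b + length Y \<and> (ds @ Y) ! p \<le> tdepth t) (snd (tcomps b ts)) ts"
proof (induction b t and b ts arbitrary: ds and ds rule: tcomp_tcomps.induct)
  case (1 b j)
  then show ?case by (simp add: dstep_def)
next
  case (2 b t)
  from "2.IH"(1)[OF "2.prems"] obtain X where X: "foldl dstep ds (tcomp b t) = ds @ X"
    "length X = length (tcomp b t)" "\<forall>y\<in>set X. y \<le> tdepth t" by blast
  have ne: "X \<noteq> []" using X(2) comp_ne by auto
  have e: "(ds @ X) ! (b + length (tcomp b t) - 1) = last X"
    using nth_last_app[OF ne, of ds] unfolding X(2) "2.prems" .
  have "foldl dstep ds (tcomp b (TNot t)) = (ds @ X) @ [Suc (last X)]"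
    by (simp only: tcomp.simps foldl_append X(1) foldl_Cons foldl_Nil dstep_def gdepth.simps e)
  moreover have "last X \<le> tdepth t" using X(3) ne by simp
  ultimately show ?case using X by auto
next
  case (3 b ts)
  from "3.IH"(1)[OF "3.prems"] obtain X where X: "foldl dstep ds (fst (tcomps b ts)) = ds @ X"
    "length X = length (fst (tcomps b ts))" "\<forall>y\<in>set X. y \<le> fold max (map tdepth ts) 0"
    "list_all2 (\<lambda>p t. p < b + length X \<and> (ds @ X) ! p \<le> tdepth t) (snd (tcomps b ts)) ts" by blast
  have "list_all2 (\<lambda>p t. (ds @ X) ! p \<le> tdepth t) (snd (tcomps b ts)) ts"
    using X(4) by (rule list_all2_mono) auto
  from la2_le_max[OF this] have e: "gdepth (ds @ X) (GAnd (snd (tcomps b ts))) \<le> tdepth (TAnd ts)"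
    by (simp add: fold_max_le)
  have "foldl dstep ds (tcomp b (TAnd ts)) = (ds @ X) @ [gdepth (ds @ X) (GAnd (snd (tcomps b ts)))]"
    by (simp only: tcomp.simps foldl_append X(1) foldl_Cons foldl_Nil dstep_def)
  then show ?case using X e by auto
next
  case (4 b ts)
  from "4.IH"(1)[OF "4.prems"] obtain X where X: "foldl dstep ds (fst (tcomps b ts)) = ds @ X"
    "length X = length (fst (tcomps b ts))" "\<forall>y\<in>set X. y \<le> fold max (map tdepth ts) 0"
    "list_all2 (\<lambda>p t. p < b + length X \<and> (ds @ X) ! p \<le> tdepth t) (snd (tcomps b ts)) ts" by blast
  have "list_all2 (\<lambda>p t. (ds @ X) ! p \<le> tdepth t) (snd (tcomps b ts)) ts"
    using X(4) by (rule list_all2_mono) auto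
  from la2_le_max[OF this] have e: "gdepth (ds @ X) (GOr (snd (tcomps b ts))) \<le> tdepth (TOr ts)"
    by (simp add: fold_max_le)
  have "foldl dstep ds (tcomp b (TOr ts)) = (ds @ X) @ [gdepth (ds @ X) (GOr (snd (tcomps b ts)))]"
    by (simp only: tcomp.simps foldl_append X(1) foldl_Cons foldl_Nil dstep_def)
  then show ?case using X e by auto
next
  case (5 b)
  then show ?case by simp
next
  case (6 b t ts)
  from "6.IH"(1)[OF "6.prems"] obtain X1 where X1: "foldl dstep ds (tcomp b t) = ds @ X1"
    "length X1 = length (tcomp b t)" "\<forall>y\<in>set X1. y \<le> tdepth t" by blast
  have l1: "length (ds @ X1) = b + length (tcomp b t)" using X1 "6.prems" by simp
  obtain X2 where X2: "foldl dstep (ds @ X1) (fst (tcomps (b + length (tcomp b t)) ts)) = (ds @ X1) @ X2"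
    "length X2 = length (fst (tcomps (b + length (tcomp b t)) ts))"
    "\<forall>y\<in>set X2. y \<le> fold max (map tdepth ts) 0"
    "list_all2 (\<lambda>p u. p < b + length (tcomp b t) + length X2 \<and> ((ds @ X1) @ X2) ! p \<le> tdepth u)
       (snd (tcomps (b + length (tcomp b t)) ts)) ts"
    using "6.IH"(3)[OF l1] by blast
  have ne: "X1 \<noteq> []" using X1(2) comp_ne by auto
  have v1: "(ds @ X1) ! (b + length (tcomp b t) - 1) = last X1"
    using nth_last_app[OF ne, of ds] unfolding X1(2) "6.prems" .
  have lt: "b + length (tcomp b t) - 1 < length (ds @ X1)" using l1 comp_pos[of b t] by simp
  have v0: "((ds @ X1) @ X2) ! (b + length (tcomp b t) - 1) = last X1"
    using v1 lt by (simp only: nth_append) simp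
  have lx: "last X1 \<le> tdepth t" using X1(3) ne by simp
  have f: "foldl dstep ds (fst (tcomps b (t # ts))) = (ds @ X1) @ X2"
    by (simp add: X1(1) X2(1))
  have L: "b + length (X1 @ X2) = b + length (tcomp b t) + length X2" using X1(2) by simp
  have r: "list_all2 (\<lambda>p u. p < b + length (X1 @ X2) \<and> (ds @ X1 @ X2) ! p \<le> tdepth u)
       (snd (tcomps (b + length (tcomp b t)) ts)) ts"
    using X2(4) unfolding L by simp
  have h: "b + length (tcomp b t) - 1 < b + length (X1 @ X2) \<and> (ds @ X1 @ X2) ! (b + length (tcomp b t) - 1) \<le> tdepth t"
    using v0 lt lx "6.prems" by simp
  have "list_all2 (\<lambda>p u. p < b + length (X1 @ X2) \<and> (ds @ X1 @ X2) ! p \<le> tdepth u)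
       (snd (tcomps b (t # ts))) (t # ts)"
    using h r by (simp only: tcomps.simps snd_conv list_all2_Cons)
  moreover have "length (X1 @ X2) = length (fst (tcomps b (t # ts)))"
    using X1(2) X2(2) by simp
  moreover have "foldl dstep ds (fst (tcomps b (t # ts))) = ds @ (X1 @ X2)" using f by simp
  moreover have "\<forall>y\<in>set (X1 @ X2). y \<le> fold max (map tdepth (t # ts)) 0"
  proof -
    have m1: "fold max (map tdepth ts) 0 \<le> fold max (map tdepth (t # ts)) 0"
      by (simp add: fold_max_le fold_max_ge fold_max_init)
    have m2: "tdepth t \<le> fold max (map tdepth (t # ts)) 0"
      by (simp add: fold_max_ge fold_max_init)
    show ?thesis using X1(3) X2(3) m1 m2 by (auto intro: order_trans)
  qed
  ultimately show ?case by (intro exI[of _ "X1 @ X2"] conjI)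
qed

definition circ_of :: "ftree \<Rightarrow> gate list" where
  "circ_of t = tcomp 0 t"

lemma circ_of_props:
  assumes "\<forall>j\<in>tins t. j < m"
  shows "wf_circ m (circ_of t)" "circ_out w (circ_of t) = teval w t"
    "circ_size (circ_of t) = tsize t" "circ_depth (circ_of t) \<le> tdepth t"
proof -
  show "wf_circ m (circ_of t)" using comp_ok(1)[OF assms, of 0] comp_ne[of 0 t]
    by (simp add: wf_circ_def circ_of_def okl_def)
  have cv: "circ_vals w C = foldl (step w) [] C" for C unfolding circ_vals_def step_def by simp
  obtain X where "foldl (step w) [] (tcomp 0 t) = [] @ X" "last X = teval w t"
    using comp_eval(1)[of "[]" 0 w t] by auto
  then show "circ_out w (circ_of t) = teval w t"
    by (simp add: circ_out_def cv circ_of_def)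
  show "circ_size (circ_of t) = tsize t" by (simp add: circ_size_def circ_of_def comp_len)
  have cd: "circ_depth C = fold max (foldl dstep [] C) 0" for C
    unfolding circ_depth_def dstep_def by simp
  obtain Y where "foldl dstep [] (tcomp 0 t) = [] @ Y" "\<forall>y\<in>set Y. y \<le> tdepth t"
    using comp_depth(1)[of "[]" 0 t] by auto
  then show "circ_depth (circ_of t) \<le> tdepth t"
    by (simp add: cd circ_of_def fold_max_le)
qed

definition radd where "radd = RPrim (RProj 0) (RComp RSucc [RProj 1])"
definition rmul where "rmul = RPrim RZero (RComp radd [RProj 1, RProj 2])"
definition rpow where "rpow = RPrim (RComp RSucc [RZero]) (RComp rmul [RProj 1, RProj 2])"

lemma reval_proj: "i < length xs \<Longrightarrow> y = xs ! i \<Longrightarrow> reval (RProj i) xs y"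
  using reval.proj by simp

lemma reval_add: "reval radd [x, y] (x + y)"
proof (induction x)
  case 0
  show ?case unfolding radd_def by (rule reval.prim0) (rule reval_proj; simp)
next
  case (Suc x)
  show ?case unfolding radd_def
    apply (rule reval.primS[OF Suc[unfolded radd_def]])
    apply (rule reval.comp[where ys = "[x + y]"])
     apply (simp add: reval_proj)
    using reval.succ[of "x + y" "[]"] by simp
qed

lemma reval_mul: "reval rmul [x, y] (x * y)"
proof (induction x)
  case 0
  show ?case unfolding rmul_def by (rule reval.prim0) (simp add: reval.zero)
next
  case (Suc x)
  show ?case unfolding rmul_def
    apply (rule reval.primS[OF Suc[unfolded rmul_def]])
    apply (rule reval.comp[where ys = "[x * y, y]"])
     apply (simp add: reval_proj)
    using reval_add[of "x * y" y] by (simp add: add.commute)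
qed

lemma reval_pow: "reval rpow [e, x] (x ^ e)"
proof (induction e)
  case 0
  show ?case unfolding rpow_def
    apply (rule reval.prim0)
    apply (rule reval.comp[where ys = "[0]"])
     apply (simp add: reval.zero)
    using reval.succ[of 0 "[]"] by simp
next
  case (Suc e)
  show ?case unfolding rpow_def
    apply (rule reval.primS[OF Suc[unfolded rpow_def]])
    apply (rule reval.comp[where ys = "[x ^ e, x]"])
     apply (simp add: reval_proj)
    using reval_mul[of "x ^ e" x] by (simp add: mult.commute)
qed

fun rconst :: "nat \<Rightarrow> recf" where
  "rconst 0 = RZero"
| "rconst (Suc c) = RComp RSucc [rconst c]"

lemma reval_const: "reval (rconst c) xs c"
proof (induction c)
  case 0 then show ?case by (simp add: reval.zero)
next
  case (Suc c)
  show ?case apply simp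
    apply (rule reval.comp[where ys = "[c]"])
    using Suc reval.succ[of c "[]"] by simp_all
qed

lemma computable_const: "computable (\<lambda>_. c)"
  unfolding computable_def using reval_const by blast

lemma computable_id: "computable (\<lambda>n. n)"
  unfolding computable_def by (rule exI[of _ "RProj 0"]) (simp add: reval_proj)

lemma computable_add: "computable f \<Longrightarrow> computable g \<Longrightarrow> computable (\<lambda>n. f n + g n)"
  unfolding computable_def
proof (elim exE)
  fix rf rg assume f: "\<forall>n. reval rf [n] (f n)" and g: "\<forall>n. reval rg [n] (g n)"
  show "\<exists>r. \<forall>n. reval r [n] (f n + g n)"
  proof (rule exI[of _ "RComp radd [rf, rg]"], intro allI)
    fix n
    have "list_all2 (\<lambda>g y. reval g [n] y) [rf, rg] [f n, g n]" using f g by simp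
    then show "reval (RComp radd [rf, rg]) [n] (f n + g n)"
      by (rule reval.comp) (rule reval_add)
  qed
qed

lemma computable_mul: "computable f \<Longrightarrow> computable g \<Longrightarrow> computable (\<lambda>n. f n * g n)"
  unfolding computable_def
proof (elim exE)
  fix rf rg assume f: "\<forall>n. reval rf [n] (f n)" and g: "\<forall>n. reval rg [n] (g n)"
  show "\<exists>r. \<forall>n. reval r [n] (f n * g n)"
  proof (rule exI[of _ "RComp rmul [rf, rg]"], intro allI)
    fix n
    have "list_all2 (\<lambda>g y. reval g [n] y) [rf, rg] [f n, g n]" using f g by simp
    then show "reval (RComp rmul [rf, rg]) [n] (f n * g n)"
      by (rule reval.comp) (rule reval_mul)
  qed
qed

lemma computable_pow: "computable f \<Longrightarrow> computable g \<Longrightarrow> computable (\<lambda>n. f n ^ g n)"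
  unfolding computable_def
proof (elim exE)
  fix rf rg assume f: "\<forall>n. reval rf [n] (f n)" and g: "\<forall>n. reval rg [n] (g n)"
  show "\<exists>r. \<forall>n. reval r [n] (f n ^ g n)"
  proof (rule exI[of _ "RComp rpow [rg, rf]"], intro allI)
    fix n
    have "list_all2 (\<lambda>g y. reval g [n] y) [rg, rf] [g n, f n]" using f g by simp
    then show "reval (RComp rpow [rg, rf]) [n] (f n ^ g n)"
      by (rule reval.comp) (rule reval_pow)
  qed
qed

fun qv :: "bool \<Rightarrow> bool \<Rightarrow> fo \<Rightarrow> bool" where
  "qv e r (FEq z1 z2) = (z1 = z2 \<or> e)"
| "qv e r (FE z1 z2) = (z1 \<noteq> z2 \<and> r)"
| "qv e r (FNot p) = (\<not> qv e r p)"
| "qv e r (FAnd p q) = (qv e r p \<and> qv e r q)"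
| "qv e r (FOr p q) = (qv e r p \<or> qv e r q)"
| "qv e r (FAll z p) = False"
| "qv e r (FEx z p) = False"

lemma holds_qv:
  assumes "qfree \<psi>" "fv \<psi> \<subseteq> {x, y}" "basic_graph N E"
  shows "holds N E a \<psi> = qv (a x = a y) ((a x, a y) \<in> E) \<psi>"
  using assms(1,2)
proof (induction \<psi>)
  case (FEq z1 z2)
  then show ?case by auto
next
  case (FE z1 z2)
  have s: "sym E" and i: "irrefl E" using assms(3) by (auto simp: basic_graph_def)
  show ?case
  proof (cases "z1 = z2")
    case True then show ?thesis using i by (simp add: irrefl_def)
  next
    case False
    then have "(z1 = x \<and> z2 = y) \<or> (z1 = y \<and> z2 = x)" using FE by auto
    then show ?thesis using False s by (auto simp: sym_def)
  qed
qed auto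

lemma models_ae:
  assumes "\<phi> = FAll x (FEx y \<psi>)" "qfree \<psi>" "fv \<phi> = {}" "basic_graph N E"
  shows "models N E \<phi> = (\<forall>v<N. \<exists>u<N. qv (if x = y then True else v = u)
            (if x = y then False else (v, u) \<in> E) \<psi>)"
proof -
  have fvs: "fv \<psi> \<subseteq> {x, y}" using assms(1,3) by auto
  have irr: "(u, u) \<notin> E" for u using assms(4) by (auto simp: basic_graph_def irrefl_def)
  show ?thesis
    unfolding models_def assms(1) using holds_qv[OF assms(2) fvs assms(4)] irr
    by (simp add: fun_upd_def)
qed

definition goodall :: "bool \<Rightarrow> nat \<Rightarrow> (nat \<times> nat) set \<Rightarrow> bool" where
  "goodall b N E = (\<forall>v<N. \<exists>u<N. u \<noteq> v \<and> ((v, u) \<in> E \<longleftrightarrow> b))"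

lemma ae_classify:
  assumes "ae_sentence \<phi>"
  shows "(\<exists>R0. \<forall>N E. basic_graph N E \<longrightarrow> (models N E \<phi> \<longleftrightarrow> R0 N)) \<or>
         (\<exists>b. \<forall>N E. basic_graph N E \<longrightarrow> (models N E \<phi> \<longleftrightarrow> goodall b N E))"
proof -
  obtain x y \<psi> where A: "\<phi> = FAll x (FEx y \<psi>)" "qfree \<psi>" "fv \<phi> = {}"
    using assms unfolding ae_sentence_def by blast
  note M = models_ae[OF A]
  let ?a = "qv True False \<psi>" and ?p1 = "qv False True \<psi>" and ?p0 = "qv False False \<psi>"
  show ?thesis
  proof (cases "x = y")
    case True
    then show ?thesis using M by (intro disjI1 exI[of _ "\<lambda>N. N = 0 \<or> ?a"]) auto
  next
    case xy: False
    have irr: "basic_graph N E \<Longrightarrow> (u, u) \<notin> E" for N E u by (auto simp: basic_graph_def irrefl_def)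
    have M2: "basic_graph N E \<Longrightarrow> models N E \<phi> = (\<forall>v<N. ?a \<or> (\<exists>u<N. u \<noteq> v \<and> qv False ((v, u) \<in> E) \<psi>))" for N E
    proof -
      assume bg: "basic_graph N E"
      have "(\<exists>u<N. qv (v = u) ((v, u) \<in> E) \<psi>) = (?a \<or> (\<exists>u<N. u \<noteq> v \<and> qv False ((v, u) \<in> E) \<psi>))"
        if v: "v < N" for v
      proof
        assume "\<exists>u<N. qv (v = u) ((v, u) \<in> E) \<psi>"
        then obtain u where u: "u < N" "qv (v = u) ((v, u) \<in> E) \<psi>" by blast
        show "?a \<or> (\<exists>u<N. u \<noteq> v \<and> qv False ((v, u) \<in> E) \<psi>)"
        proof (cases "u = v")
          case True then show ?thesis using u irr[OF bg, of v] by simp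
        next
          case False then show ?thesis using u by (auto simp: eq_commute)
        qed
      next
        assume "?a \<or> (\<exists>u<N. u \<noteq> v \<and> qv False ((v, u) \<in> E) \<psi>)"
        then show "\<exists>u<N. qv (v = u) ((v, u) \<in> E) \<psi>"
        proof
          assume "?a" then show ?thesis using v irr[OF bg, of v] by (intro exI[of _ v]) simp
        next
          assume "\<exists>u<N. u \<noteq> v \<and> qv False ((v, u) \<in> E) \<psi>"
          then obtain u where "u < N" "u \<noteq> v" "qv False ((v, u) \<in> E) \<psi>" by blast
          then show ?thesis by (intro exI[of _ u]) (auto simp: eq_commute)
        qed
      qed
      then show ?thesis using M[OF bg] xy by simp
    qed
    show ?thesis
    proof (cases ?a)
      case True
      then show ?thesis using M2 by (intro disjI1 exI[of _ "\<lambda>N. True"]) auto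
    next
      case na: False
      show ?thesis
      proof (cases ?p1; cases ?p0)
        assume "?p1" "?p0"
        then have q: "qv False r \<psi>" for r by (cases r) auto
        have "models N E \<phi> = (N \<noteq> 1)" if bg: "basic_graph N E" for N E
        proof -
          have "(\<forall>v<N. \<exists>u<N. u \<noteq> v) = (N \<noteq> 1)"
          proof
            assume "\<forall>v<N. \<exists>u<N. u \<noteq> v" then show "N \<noteq> 1" by force
          next
            assume "N \<noteq> 1"
            show "\<forall>v<N. \<exists>u<N. u \<noteq> v"
            proof (intro allI impI)
              fix v assume "v < N"
              then have "N \<ge> 2" using \<open>N \<noteq> 1\<close> by simp
              then show "\<exists>u<N. u \<noteq> v" by (intro exI[of _ "if v = 0 then 1 else 0"]) auto
            qed
          qed
          then show ?thesis using M2[OF bg] na by (simp add: q)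
        qed
        then show ?thesis by (intro disjI1 exI[of _ "\<lambda>N. N \<noteq> 1"]) auto
      next
        assume "\<not> ?p1" "\<not> ?p0"
        then have "\<not> qv False r \<psi>" for r by (cases r) auto
        then have "basic_graph N E \<Longrightarrow> models N E \<phi> = (N = 0)" for N E
          using M2[of N E] na by auto
        then show ?thesis by (intro disjI1 exI[of _ "\<lambda>N. N = 0"]) auto
      next
        assume "?p1" "\<not> ?p0"
        then have "qv False r \<psi> = r" for r by (cases r) auto
        then have "basic_graph N E \<Longrightarrow> models N E \<phi> = goodall True N E" for N E
          using M2[of N E] na unfolding goodall_def by auto
        then show ?thesis by (intro disjI2 exI[of _ True]) auto
      next
        assume "\<not> ?p1" "?p0"
        then have "qv False r \<psi> = (\<not> r)" for r by (cases r) auto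
        then have "basic_graph N E \<Longrightarrow> models N E \<phi> = goodall False N E" for N E
          using M2[of N E] na unfolding goodall_def by auto
        then show ?thesis by (intro disjI2 exI[of _ False]) auto
      qed
    qed
  qed
qed

definition badset :: "bool \<Rightarrow> nat \<Rightarrow> (nat \<times> nat) set \<Rightarrow> nat set" where
  "badset b N E = {v. v < N \<and> (\<forall>u<N. u \<noteq> v \<longrightarrow> ((v, u) \<in> E \<longleftrightarrow> \<not> b))}"

definition allowed :: "modop \<Rightarrow> bool \<Rightarrow> bool" where
  "allowed m b = (case m of Del \<Rightarrow> \<not> b | Add \<Rightarrow> b | Edit \<Rightarrow> True)"

lemma flip_mem: "(p \<in> E - S \<union> (S - E)) = ((p \<in> E) \<noteq> (p \<in> S))"
  by auto

lemma RM_static: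
  assumes "\<forall>N E. basic_graph N E \<longrightarrow> (models N E \<phi> \<longleftrightarrow> R0 N)"
  shows "RM_basic m \<phi> = {(graph_enc N E, k) | N E k. basic_graph N E \<and> R0 N}"
proof (intro set_eqI iffI)
  fix z assume "z \<in> RM_basic m \<phi>"
  then obtain N E k S where z: "z = (graph_enc N E, k)" "basic_graph N E"
    "basic_graph N (E - S \<union> (S - E))" "models N (E - S \<union> (S - E)) \<phi>"
    unfolding RM_basic_def by blast
  then show "z \<in> {(graph_enc N E, k::nat) | N E k. basic_graph N E \<and> R0 N}" using assms by blast
next
  fix z assume "z \<in> {(graph_enc N E, k::nat) | N E k. basic_graph N E \<and> R0 N}"
  then obtain N E k where z: "z = (graph_enc N E, k)" "basic_graph N E" "R0 N" by blast
  have "enorm {} = 0" by (simp add: enorm_def)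
  moreover have "op_ok m E {}" by (cases m) (auto simp: op_ok_def)
  ultimately show "z \<in> RM_basic m \<phi>" unfolding RM_basic_def using z assms
    by (intro CollectI exI[of _ N] exI[of _ E] exI[of _ k]) (auto intro!: exI[of _ "{}"])
qed

lemma enorm_bound:
  assumes "S \<subseteq> {0..<N} \<times> {0..<N}" "A \<subseteq> \<Union> {{u, v} | u v. (u, v) \<in> S}"
  shows "card A \<le> 2 * enorm S"
proof -
  let ?P = "{{u, v} | u v. (u, v) \<in> S}"
  have P: "?P = (\<lambda>(u, v). {u, v}) ` S" by auto
  have fS: "finite S" using assms(1) finite_subset by blast
  then have fP: "finite ?P" unfolding P by simp
  have fU: "finite (\<Union> ?P)" using fP by auto
  have "card A \<le> card (\<Union> ?P)" using card_mono[OF fU assms(2)] .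
  also have "\<dots> \<le> sum card ?P" by (rule card_Union_le_sum_card)
  also have "\<dots> \<le> card ?P * 2"
    using sum_bounded_above[of ?P card 2] by (force intro: card_insert_le_m1 simp: card_insert_if)
  finally show ?thesis by (simp add: enorm_def)
qed

lemma D_forward:
  assumes bg: "basic_graph N E" and S: "S \<subseteq> {0..<N} \<times> {0..<N}" "enorm S \<le> k" "op_ok m E S"
    and g: "goodall b N (E - S \<union> (S - E))"
  shows "badset b N E = {} \<or> (allowed m b \<and> 2 \<le> N \<and> card (badset b N E) \<le> 2 * k)"
proof (cases "badset b N E = {}")
  case True then show ?thesis by simp
next
  case False
  have key: "\<exists>u<N. u \<noteq> v \<and> (v, u) \<in> S \<and> ((v, u) \<in> E \<longleftrightarrow> \<not> b)" if v: "v \<in> badset b N E" for v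
  proof -
    have vN: "v < N" using v by (simp add: badset_def)
    obtain u where u: "u < N" "u \<noteq> v" "((v, u) \<in> E - S \<union> (S - E)) = b"
      using g vN unfolding goodall_def by blast
    have "((v, u) \<in> E) = (\<not> b)" using v u unfolding badset_def by auto
    then show ?thesis using u by (intro exI[of _ u]) (auto simp: flip_mem)
  qed
  obtain v where v: "v \<in> badset b N E" using False by blast
  obtain u where u: "u < N" "u \<noteq> v" "(v, u) \<in> S" "((v, u) \<in> E \<longleftrightarrow> \<not> b)" using key[OF v] by blast
  have vN: "v < N" using v by (simp add: badset_def)
  have N2: "2 \<le> N" using u vN by linarith
  have al: "allowed m b"
    using S(3) u unfolding allowed_def op_ok_def by (cases m) auto
  have "badset b N E \<subseteq> \<Union> {{u, v} | u v. (u, v) \<in> S}"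
  proof
    fix x assume "x \<in> badset b N E"
    then obtain y where "(x, y) \<in> S" using key by blast
    then show "x \<in> \<Union> {{u, v} | u v. (u, v) \<in> S}" by blast
  qed
  from enorm_bound[OF S(1) this] S(2) have "card (badset b N E) \<le> 2 * k" by simp
  then show ?thesis using al N2 by simp
qed

lemma D_backward:
  assumes bg: "basic_graph N E"
    and h: "badset b N E = {} \<or> (allowed m b \<and> 2 \<le> N \<and> card (badset b N E) \<le> 2 * k)"
  shows "\<exists>S. S \<subseteq> {0..<N} \<times> {0..<N} \<and> enorm S \<le> k \<and> op_ok m E S \<and>
          basic_graph N (E - S \<union> (S - E)) \<and> goodall b N (E - S \<union> (S - E))"
proof (cases "badset b N E = {}")
  case True
  have "goodall b N E" using True unfolding goodall_def badset_def by auto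
  moreover have "enorm {} = 0" by (simp add: enorm_def)
  moreover have "op_ok m E {}" by (cases m) (auto simp: op_ok_def)
  ultimately show ?thesis using bg by (intro exI[of _ "{}"]) auto
next
  case False
  with h have al: "allowed m b" and N2: "2 \<le> N" and cB: "card (badset b N E) \<le> 2 * k" by auto
  define B where "B = badset b N E"
  have BN: "B \<subseteq> {..<N}" unfolding B_def badset_def by auto
  have fB: "finite B" using BN finite_subset by blast
  define xs where "xs = sorted_list_of_set B"
  have sx: "set xs = B" and dx: "distinct xs" using fB by (auto simp: xs_def)
  define i where "i = length xs"
  have iB: "i = card B" using fB by (simp add: i_def xs_def)
  define h where "h = (i + 1) div 2"
  define pa where "pa j = xs ! (2 * j)" for j
  define pb where "pb j = (if 2 * j + 1 < i then xs ! (2 * j + 1) else (if xs ! (2 * j) = 0 then 1 else 0))" for j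
  define T where "T = (\<lambda>j. (pa j, pb j)) ` {..<h}"
  define S where "S = T \<union> T\<inverse>"
  have sq: "E \<subseteq> {0..<N} \<times> {0..<N}" and sy: "sym E" and ir: "irrefl E"
    using bg by (auto simp: basic_graph_def)
  have badE: "\<And>v u. v \<in> B \<Longrightarrow> u < N \<Longrightarrow> u \<noteq> v \<Longrightarrow> ((v, u) \<in> E \<longleftrightarrow> \<not> b)"
    unfolding B_def badset_def by auto
  have paB: "pa j \<in> B" if "j < h" for j
  proof -
    have "2 * j < i" using that unfolding h_def by linarith
    then show ?thesis unfolding pa_def using sx i_def nth_mem by blast
  qed
  have pbN: "pb j < N \<and> pb j \<noteq> pa j" if "j < h" for j
  proof (cases "2 * j + 1 < i")
    case True
    then have "pb j \<in> B" unfolding pb_def using sx i_def nth_mem by auto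
    moreover have "pb j \<noteq> pa j" using True dx unfolding pb_def pa_def i_def
      by (simp add: nth_eq_iff_index_eq)
    ultimately show ?thesis using BN by auto
  next
    case False
    then show ?thesis using N2 unfolding pb_def pa_def by auto
  qed
  have paN: "pa j < N" if "j < h" for j using paB[OF that] BN by auto
  have F3: "a \<noteq> c \<and> a < N \<and> c < N \<and> ((a, c) \<in> E \<longleftrightarrow> \<not> b)" if ac: "(a, c) \<in> S" for a c
  proof -
    from ac obtain j where j: "j < h" "(a, c) = (pa j, pb j) \<or> (a, c) = (pb j, pa j)"
      unfolding S_def T_def by auto
    have e1: "((pa j, pb j) \<in> E \<longleftrightarrow> \<not> b)" using badE[OF paB[OF j(1)]] pbN[OF j(1)] by auto
    have e2: "((pb j, pa j) \<in> E) = ((pa j, pb j) \<in> E)" using sy by (auto simp: sym_def)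
    show ?thesis using j e1 e2 pbN[OF j(1)] paN[OF j(1)] by auto
  qed
  have Ssq: "S \<subseteq> {0..<N} \<times> {0..<N}" using F3 by auto
  have Ssym: "(a, c) \<in> S \<longleftrightarrow> (c, a) \<in> S" for a c unfolding S_def by auto
  have opok: "op_ok m E S"
    using al F3 unfolding allowed_def op_ok_def by (cases m) auto
  have en: "enorm S \<le> k"
  proof -
    have "{{u, v} | u v. (u, v) \<in> S} \<subseteq> (\<lambda>j. {pa j, pb j}) ` {..<h}"
      unfolding S_def T_def by auto
    then have "enorm S \<le> card ((\<lambda>j. {pa j, pb j}) ` {..<h})"
      unfolding enorm_def by (intro card_mono) auto
    also have "\<dots> \<le> h" using card_image_le[of "{..<h}"] by simp
    also have "h \<le> k" using cB iB unfolding h_def B_def by linarith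
    finally show ?thesis .
  qed
  let ?E' = "E - S \<union> (S - E)"
  have bg': "basic_graph N ?E'"
    unfolding basic_graph_def
  proof (intro conjI)
    show "?E' \<subseteq> {0..<N} \<times> {0..<N}" using sq Ssq by auto
    show "sym ?E'" unfolding sym_def
    proof (intro allI impI)
      fix a c assume "(a, c) \<in> ?E'"
      then show "(c, a) \<in> ?E'" using sy Ssym[of a c] by (auto simp: sym_def)
    qed
    show "irrefl ?E'" using ir F3 by (auto simp: irrefl_def)
  qed
  have good': "goodall b N ?E'" unfolding goodall_def
  proof (intro allI impI)
    fix v assume vN: "v < N"
    show "\<exists>u<N. u \<noteq> v \<and> (((v, u) \<in> ?E') = b)"
    proof (cases "v \<in> B")
      case True
      then obtain idx where idx: "idx < i" "xs ! idx = v" using sx unfolding i_def by (metis in_set_conv_nth)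
      define j where "j = idx div 2"
      have jh: "j < h" unfolding j_def h_def using idx by linarith
      have "(v, pb j) \<in> S \<or> (v, pa j) \<in> S \<and> v = pb j"
      proof (cases "even idx")
        case True
        then have "v = pa j" unfolding pa_def j_def using idx by simp
        then show ?thesis unfolding S_def T_def using jh by auto
      next
        case False
        then have "idx = 2 * j + 1" unfolding j_def by presburger
        then have "v = pb j" unfolding pb_def using idx by simp
        then show ?thesis unfolding S_def T_def using jh by auto
      qed
      then obtain u where u: "(v, u) \<in> S" by blast
      then show ?thesis using F3[OF u] by (intro exI[of _ u]) (auto simp: flip_mem)
    next
      case False
      then obtain u where u: "u < N" "u \<noteq> v" "((v, u) \<in> E) = b"
        using vN unfolding B_def badset_def by auto
      have "(v, u) \<notin> S" using F3 u by blast
      then show ?thesis using u by (intro exI[of _ u]) (auto simp: flip_mem)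
    qed
  qed
  show ?thesis using Ssq en opok bg' good' by blast
qed

lemma RM_D:
  assumes "\<forall>N E. basic_graph N E \<longrightarrow> (models N E \<phi> \<longleftrightarrow> goodall b N E)"
  shows "RM_basic m \<phi> = {(graph_enc N E, k) | N E k. basic_graph N E \<and>
     (badset b N E = {} \<or> (allowed m b \<and> 2 \<le> N \<and> card (badset b N E) \<le> 2 * k))}"
proof (intro set_eqI iffI)
  fix z assume "z \<in> RM_basic m \<phi>"
  then obtain N E k S where z: "z = (graph_enc N E, k)" "basic_graph N E"
    "S \<subseteq> {0..<N} \<times> {0..<N}" "enorm S \<le> k" "op_ok m E S"
    "basic_graph N (E - S \<union> (S - E))" "models N (E - S \<union> (S - E)) \<phi>"
    unfolding RM_basic_def by blast
  have "goodall b N (E - S \<union> (S - E))" using z(6,7) assms by blast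
  from D_forward[OF z(2-5) this] show "z \<in> {(graph_enc N E, k::nat) | N E k. basic_graph N E \<and>
     (badset b N E = {} \<or> (allowed m b \<and> 2 \<le> N \<and> card (badset b N E) \<le> 2 * k))}"
    using z by blast
next
  fix z assume "z \<in> {(graph_enc N E, k::nat) | N E k. basic_graph N E \<and>
     (badset b N E = {} \<or> (allowed m b \<and> 2 \<le> N \<and> card (badset b N E) \<le> 2 * k))}"
  then obtain N E k where z: "z = (graph_enc N E, k)" "basic_graph N E"
     "badset b N E = {} \<or> (allowed m b \<and> 2 \<le> N \<and> card (badset b N E) \<le> 2 * k)" by blast
  obtain S where S: "S \<subseteq> {0..<N} \<times> {0..<N}" "enorm S \<le> k" "op_ok m E S"
    "basic_graph N (E - S \<union> (S - E))" "goodall b N (E - S \<union> (S - E))"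
    using D_backward[OF z(2,3)] by blast
  have "models N (E - S \<union> (S - E)) \<phi>" using S(4,5) assms by blast
  then show "z \<in> RM_basic m \<phi>" unfolding RM_basic_def using z S by blast
qed

lemma concat_map_upt:
  "concat (map (\<lambda>i. map (g i) [0..<M]) [0..<K]) = map (\<lambda>p. g (p div M) (p mod M)) [0..<K * M]"
proof (induction K)
  case 0 then show ?case by simp
next
  case (Suc K)
  have e: "Suc K * M = K * M + M" by simp
  have "[0..<Suc K * M] = [0..<K * M] @ [K * M..<K * M + M]"
    unfolding e by (rule upt_add_eq_append) simp
  moreover have "map (\<lambda>p. g (p div M) (p mod M)) [K * M..<K * M + M] = map (g K) [0..<M]"
  proof (rule nth_equalityI)
    show "length (map (\<lambda>p. g (p div M) (p mod M)) [K * M..<K * M + M]) = length (map (g K) [0..<M])" by simp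
  next
    fix j assume "j < length (map (\<lambda>p. g (p div M) (p mod M)) [K * M..<K * M + M])"
    then have j: "j < M" by simp
    then have "(K * M + j) div M = K" "(K * M + j) mod M = j" by auto
    then show "map (\<lambda>p. g (p div M) (p mod M)) [K * M..<K * M + M] ! j = map (g K) [0..<M] ! j"
      using j by (simp add: add.commute)
  qed
  ultimately show ?case using Suc by simp
qed

lemma graph_enc_alt: "graph_enc N E = map (\<lambda>p. (p div N, p mod N) \<in> E) [0..<N * N]"
  unfolding graph_enc_def by (rule concat_map_upt)

lemma len_graph_enc: "length (graph_enc N E) = N * N"
  by (simp add: graph_enc_alt)

lemma idx_lt: "i < N \<Longrightarrow> j < (N::nat) \<Longrightarrow> i * N + j < N * N"
proof -
  assume "i < N" "j < N"
  then have "i * N + j < i * N + N" by simp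
  also have "\<dots> = Suc i * N" by simp
  also have "\<dots> \<le> N * N" using \<open>i < N\<close> by (metis Suc_leI mult_le_mono1)
  finally show ?thesis .
qed

lemma nth_graph_enc: "i < N \<Longrightarrow> j < N \<Longrightarrow> graph_enc N E ! (i * N + j) = ((i, j) \<in> E)"
  using idx_lt[of i N j] by (simp add: graph_enc_alt)

definition Ew :: "nat \<Rightarrow> bool list \<Rightarrow> (nat \<times> nat) set" where
  "Ew N w = {(i, j). i < N \<and> j < N \<and> w ! (i * N + j)}"

lemma graph_enc_Ew: "length w = N * N \<Longrightarrow> graph_enc N (Ew N w) = w"
proof (rule nth_equalityI)
  assume l: "length w = N * N"
  show "length (graph_enc N (Ew N w)) = length w" using l by (simp add: len_graph_enc)
  fix p assume "p < length (graph_enc N (Ew N w))"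
  then have p: "p < N * N" by (simp add: len_graph_enc)
  then have N0: "N > 0" by (cases N) auto
  have a: "p div N < N" using p by (simp add: less_mult_imp_div_less)
  have b: "p mod N < N" using N0 by simp
  have "p div N * N + p mod N = p" by simp
  then show "graph_enc N (Ew N w) ! p = w ! p"
    using p a b by (simp add: graph_enc_alt Ew_def)
qed

lemma sq_inj: "(a::nat) * a = b * b \<Longrightarrow> a = b"
proof (rule ccontr)
  assume h: "a * a = b * b" "a \<noteq> b"
  then consider "a < b" | "b < a" by linarith
  then show False
  proof cases
    case 1 then have "a * a < b * b" by (intro mult_strict_mono) auto
    then show False using h by simp
  next
    case 2 then have "b * b < a * a" by (intro mult_strict_mono) auto
    then show False using h by simp
  qed
qed

lemma Ew_graph_enc: "basic_graph N E \<Longrightarrow> Ew N (graph_enc N E) = E"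
proof (intro set_eqI)
  fix z :: "nat \<times> nat" assume bg: "basic_graph N E"
  obtain i j where z: "z = (i, j)" by (cases z)
  have "z \<in> E \<Longrightarrow> i < N \<and> j < N" using bg z unfolding basic_graph_def by auto
  then show "z \<in> Ew N (graph_enc N E) \<longleftrightarrow> z \<in> E"
    unfolding Ew_def z using nth_graph_enc[of i N j E] by auto
qed

lemma Q_mem:
  fixes R :: "nat \<Rightarrow> (nat \<times> nat) set \<Rightarrow> nat \<Rightarrow> bool"
  assumes l: "length w = N * N"
  shows "((w, k) \<in> {(graph_enc N E, k) | N E k. basic_graph N E \<and> R N E k}) =
     (basic_graph N (Ew N w) \<and> R N (Ew N w) k)"
proof
  assume "(w, k) \<in> {(graph_enc N E, k) | N E k. basic_graph N E \<and> R N E k}"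
  then obtain N' E k' where e0: "(w, k) = (graph_enc N' E, k')" "basic_graph N' E" "R N' E k'"
    unfolding mem_Collect_eq by blast
  have w: "w = graph_enc N' E" and kk: "k' = k" using e0(1) by auto
  have "N' * N' = N * N" using l unfolding w len_graph_enc .
  then have NN: "N' = N" by (rule sq_inj)
  have EE: "Ew N w = E" unfolding w NN using Ew_graph_enc e0(2) NN by blast
  show "basic_graph N (Ew N w) \<and> R N (Ew N w) k" unfolding EE using e0(2,3) NN kk by blast
next
  assume h: "basic_graph N (Ew N w) \<and> R N (Ew N w) k"
  have w: "w = graph_enc N (Ew N w)" using graph_enc_Ew[OF l] by (rule sym)
  show "(w, k) \<in> {(graph_enc N E, k) | N E k. basic_graph N E \<and> R N E k}"
    unfolding mem_Collect_eq using h w by blast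
qed

lemma Q_len:
  "(w, k) \<in> {(graph_enc N E, k) | N E k. basic_graph N E \<and> R N E k} \<Longrightarrow> \<exists>N. length w = N * N"
  unfolding mem_Collect_eq using len_graph_enc by (metis Pair_inject)

definition bitv :: "nat \<Rightarrow> nat \<Rightarrow> bool" where
  "bitv v p = odd (v div 2 ^ p)"

definition proj :: "nat list \<Rightarrow> nat \<Rightarrow> bool list" where
  "proj P v = map (bitv v) P"

definition lg :: "nat \<Rightarrow> nat" where
  "lg N = (LEAST L. N < 2 ^ L)"

lemma lg_gt: "N < 2 ^ lg N"
  unfolding lg_def by (rule LeastI[of _ N]) simp

lemma four_pow: "(4::nat) ^ x = (2 ^ x) ^ 2"
proof -
  have "(4::nat) ^ x = (2 * 2) ^ x" by simp
  also have "\<dots> = 2 ^ x * 2 ^ x" by (rule power_mult_distrib)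
  finally show ?thesis by (simp add: power2_eq_square)
qed

lemma lg_le: "4 ^ lg N \<le> 4 * (N + 1) ^ 2"
proof (cases "lg N")
  case 0 then show ?thesis by simp
next
  case (Suc L)
  have "\<not> N < 2 ^ L" using not_less_Least[of L "\<lambda>L. N < 2 ^ L"] Suc unfolding lg_def by simp
  then have "2 ^ L \<le> N" by simp
  then have "2 ^ lg N \<le> 2 * N" using Suc by simp
  then have "(2 ^ lg N) ^ 2 \<le> (2 * N) ^ 2" by (rule power_mono) simp
  also have "\<dots> = 4 * N ^ 2" by (simp add: power_mult_distrib)
  also have "\<dots> \<le> 4 * (N + 1) ^ 2" by (simp add: power_mono)
  finally show ?thesis unfolding four_pow .
qed

lemma sep_bit: "v < 2 ^ L \<Longrightarrow> u < 2 ^ L \<Longrightarrow> v \<noteq> u \<Longrightarrow> \<exists>p<L. bitv v p \<noteq> bitv u p"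
proof (induction L arbitrary: v u)
  case 0 then show ?case by simp
next
  case (Suc L)
  show ?case
  proof (cases "odd v = odd u")
    case False
    then show ?thesis by (intro exI[of _ 0]) (simp add: bitv_def)
  next
    case True
    have "v div 2 \<noteq> u div 2"
    proof
      assume "v div 2 = u div 2"
      moreover have "v mod 2 = u mod 2" using True by presburger
      ultimately have "v = u" by (metis div_mult_mod_eq)
      then show False using Suc.prems(3) by simp
    qed
    moreover have "v div 2 < 2 ^ L" "u div 2 < 2 ^ L" using Suc.prems by auto
    ultimately obtain p where "p < L" "bitv (v div 2) p \<noteq> bitv (u div 2) p" using Suc.IH by blast
    then show ?thesis
      by (intro exI[of _ "Suc p"]) (simp add: bitv_def div_mult2_eq)
  qed
qed

lemma idx_lt2: "i < N \<Longrightarrow> j < (N::nat) \<Longrightarrow> i * N + j < N * N"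
proof -
  assume "i < N" "j < N"
  then have "i * N + j < i * N + N" by simp
  also have "\<dots> = Suc i * N" by simp
  also have "\<dots> \<le> N * N" using \<open>i < N\<close> by (metis Suc_leI mult_le_mono1)
  finally show ?thesis .
qed

lemma hash_exists:
  assumes d: "distinct vs" and l: "length vs = t" and b: "\<forall>v\<in>set vs. v < 2 ^ L"
  shows "\<exists>P. length P = t * t \<and> set P \<subseteq> {..<Suc L} \<and> distinct (map (proj P) vs)"
proof -
  define sp where "sp i j = (if vs ! i \<noteq> vs ! j then (SOME p. p < L \<and> bitv (vs ! i) p \<noteq> bitv (vs ! j) p) else 0)" for i j
  define P where "P = map (\<lambda>q. sp (q div t) (q mod t)) [0..<t * t]"
  have spok: "sp i j < L \<and> bitv (vs ! i) (sp i j) \<noteq> bitv (vs ! j) (sp i j)"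
    if "i < t" "j < t" "i \<noteq> j" for i j
  proof -
    have ne: "vs ! i \<noteq> vs ! j" using d l that by (simp add: nth_eq_iff_index_eq)
    have vi: "vs ! i < 2 ^ L" using b l that(1) nth_mem by blast
    have vj: "vs ! j < 2 ^ L" using b l that(2) nth_mem by blast
    have ex: "\<exists>p. p < L \<and> bitv (vs ! i) p \<noteq> bitv (vs ! j) p"
      using sep_bit[OF vi vj ne] by blast
    have "sp i j = (SOME p. p < L \<and> bitv (vs ! i) p \<noteq> bitv (vs ! j) p)"
      using ne by (simp add: sp_def)
    then show ?thesis using someI_ex[OF ex] by simp
  qed
  have spL: "sp i j < Suc L" if "i < t" "j < t" for i j
    using spok[OF that] unfolding sp_def by (cases "i = j") auto
  have setP: "set P \<subseteq> {..<Suc L}"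
  proof
    fix p assume "p \<in> set P"
    then obtain q where q: "q < t * t" "p = sp (q div t) (q mod t)" unfolding P_def by auto
    have t0: "t > 0" using q by (cases t) auto
    have "q div t < t" using q by (simp add: less_mult_imp_div_less)
    moreover have "q mod t < t" using t0 by simp
    ultimately show "p \<in> {..<Suc L}" using spL q by auto
  qed
  have "distinct (map (proj P) vs)"
    unfolding distinct_conv_nth
  proof (intro allI impI)
    fix i j assume ij: "i < length (map (proj P) vs)" "j < length (map (proj P) vs)" "i \<noteq> j"
    then have it: "i < t" "j < t" using l by auto
    define q where "q = i * t + j"
    have qt: "q < t * t" unfolding q_def using it by (rule idx_lt2)
    have t0: "t > 0" using it by simp
    have qd: "q div t = i" "q mod t = j" unfolding q_def using it t0 by auto
    have Pq: "P ! q = sp i j" unfolding P_def using qt qd by simp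
    have lP: "length P = t * t" unfolding P_def by simp
    have "proj P (vs ! i) ! q \<noteq> proj P (vs ! j) ! q"
      unfolding proj_def using qt lP Pq spok[OF it ij(3)] by simp
    then show "map (proj P) vs ! i \<noteq> map (proj P) vs ! j" using it l by auto
  qed
  then show ?thesis using setP by (intro exI[of _ P]) (simp add: P_def)
qed

lemma sum_list_le: "(\<forall>x\<in>set ts. f x \<le> (B::nat)) \<Longrightarrow> sum_list (map f ts) \<le> length ts * B"
  by (induction ts) auto

lemma tsize_or_le: "(\<forall>x\<in>set ts. tsize x \<le> B) \<Longrightarrow> tsize (TOr ts) \<le> Suc (length ts * B)"
  using sum_list_le[of ts tsize B] by simp
lemma tsize_and_le: "(\<forall>x\<in>set ts. tsize x \<le> B) \<Longrightarrow> tsize (TAnd ts) \<le> Suc (length ts * B)"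
  using sum_list_le[of ts tsize B] by simp
lemma tdepth_or_le: "(\<forall>x\<in>set ts. tdepth x \<le> d) \<Longrightarrow> tdepth (TOr ts) \<le> Suc d"
  by (simp add: fold_max_le)
lemma tdepth_and_le: "(\<forall>x\<in>set ts. tdepth x \<le> d) \<Longrightarrow> tdepth (TAnd ts) \<le> Suc d"
  by (simp add: fold_max_le)

lemma suc_mul_le: "a \<le> a' \<Longrightarrow> X \<le> X' \<Longrightarrow> 1 \<le> X' \<Longrightarrow> Suc (a * X) \<le> (a' + 1) * (X'::nat)"
proof -
  assume "a \<le> a'" "X \<le> X'" "1 \<le> X'"
  then have "a * X \<le> a' * X'" by (simp add: mult_mono)
  then show ?thesis using \<open>1 \<le> X'\<close> by simp
qed

definition atleast :: "nat \<Rightarrow> nat \<Rightarrow> (nat \<Rightarrow> ftree) \<Rightarrow> ftree" where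
  "atleast t N T = TOr (map (\<lambda>P. TOr (map (\<lambda>qs. TAnd (map (\<lambda>q. TOr (map T (filter (\<lambda>v. proj P v = q) [0..<N]))) qs))
      (filter distinct (List.n_lists t (List.n_lists (t * t) [True, False])))))
      (List.n_lists (t * t) [0..<Suc (lg N)]))"

lemma atleast_correct:
  "teval w (atleast t N T) = (t \<le> card {v. v < N \<and> teval w (T v)})"
proof
  assume "teval w (atleast t N T)"
  then obtain P qs where qs: "qs \<in> set (List.n_lists t (List.n_lists (t * t) [True, False]))" "distinct qs"
    and all: "\<forall>q\<in>set qs. \<exists>v. v < N \<and> proj P v = q \<and> teval w (T v)"
    unfolding atleast_def by auto
  have lq: "length qs = t" using qs(1) by (simp add: length_n_lists_elem)
  obtain sel where sel: "\<forall>q\<in>set qs. sel q < N \<and> proj P (sel q) = q \<and> teval w (T (sel q))"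
    using bchoice[OF all] by blast
  have inj: "inj_on sel (set qs)"
    by (rule inj_onI) (metis sel)
  have sub: "sel ` set qs \<subseteq> {v. v < N \<and> teval w (T v)}" using sel by auto
  have "t = card (sel ` set qs)" using card_image[OF inj] distinct_card[OF qs(2)] lq by simp
  also have "\<dots> \<le> card {v. v < N \<and> teval w (T v)}" by (rule card_mono[OF _ sub]) simp
  finally show "t \<le> card {v. v < N \<and> teval w (T v)}" .
next
  assume c: "t \<le> card {v. v < N \<and> teval w (T v)}"
  obtain Z where Z: "Z \<subseteq> {v. v < N \<and> teval w (T v)}" "card Z = t" "finite Z"
    using obtain_subset_with_card_n[OF c] by blast
  define vs where "vs = sorted_list_of_set Z"
  have vs: "distinct vs" "length vs = t" "set vs = Z" using Z by (auto simp: vs_def)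
  have b: "\<forall>v\<in>set vs. v < 2 ^ lg N" using vs(3) Z(1) lg_gt[of N] by auto
  obtain P where P: "length P = t * t" "set P \<subseteq> {..<Suc (lg N)}" "distinct (map (proj P) vs)"
    using hash_exists[OF vs(1,2) b] by blast
  define qs where "qs = map (proj P) vs"
  have Pin: "P \<in> set (List.n_lists (t * t) [0..<Suc (lg N)])" using P by (auto simp: set_n_lists)
  have qin: "qs \<in> set (filter distinct (List.n_lists t (List.n_lists (t * t) [True, False])))"
    using P vs unfolding qs_def by (auto simp: set_n_lists proj_def)
  have H: "\<forall>q\<in>set qs. \<exists>v<N. proj P v = q \<and> teval w (T v)"
    unfolding qs_def using vs(3) Z(1) by auto
  show "teval w (atleast t N T)"
    unfolding atleast_def using Pin qin H by (auto intro!: bexI[of _ P] exI[of _ qs])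
qed

lemma atleast_size:
  assumes s: "\<forall>v<N. tsize (T v) \<le> s" and s1: "1 \<le> s"
  shows "tsize (atleast t N T) \<le> (Suc (lg N) ^ (t * t) + 1) * (((2 ^ (t * t)) ^ t + 1) * ((t + 1) * ((N + 1) * s)))"
proof -
  let ?I = "\<lambda>P q. TOr (map T (filter (\<lambda>v. proj P v = q) [0..<N]))"
  have I: "tsize (?I P q) \<le> (N + 1) * s" for P q
  proof -
    have "tsize (?I P q) \<le> Suc (length (map T (filter (\<lambda>v. proj P v = q) [0..<N])) * s)"
      by (rule tsize_or_le) (use s in auto)
    also have "\<dots> \<le> (N + 1) * s"
      by (rule suc_mul_le) (use s1 length_filter_le[of _ "[0..<N]"] in auto)
    finally show ?thesis .
  qed
  let ?A = "\<lambda>P qs. TAnd (map (?I P) qs)"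
  have A: "tsize (?A P qs) \<le> (t + 1) * ((N + 1) * s)" if "length qs = t" for P qs
  proof -
    have "tsize (?A P qs) \<le> Suc (length (map (?I P) qs) * ((N + 1) * s))"
      by (rule tsize_and_le) (use I in auto)
    also have "\<dots> \<le> (t + 1) * ((N + 1) * s)"
      by (rule suc_mul_le) (use s1 that in auto)
    finally show ?thesis .
  qed
  let ?L = "filter distinct (List.n_lists t (List.n_lists (t * t) [True, False]))"
  let ?O = "\<lambda>P. TOr (map (?A P) ?L)"
  have O: "tsize (?O P) \<le> ((2 ^ (t * t)) ^ t + 1) * ((t + 1) * ((N + 1) * s))" for P
  proof -
    have "tsize (?O P) \<le> Suc (length (map (?A P) ?L) * ((t + 1) * ((N + 1) * s)))"
      by (rule tsize_or_le) (use A in \<open>auto simp: length_n_lists_elem\<close>)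
    also have "\<dots> \<le> ((2 ^ (t * t)) ^ t + 1) * ((t + 1) * ((N + 1) * s))"
    proof (rule suc_mul_le)
      have "length ?L \<le> length (List.n_lists t (List.n_lists (t * t) [True, False]))"
        by (rule length_filter_le)
      then show "length (map (?A P) ?L) \<le> (2 ^ (t * t)) ^ t" by (simp add: length_n_lists numeral_2_eq_2)
    qed (use s1 in auto)
    finally show ?thesis .
  qed
  have "tsize (atleast t N T) \<le> Suc (length (map ?O (List.n_lists (t * t) [0..<Suc (lg N)])) * (((2 ^ (t * t)) ^ t + 1) * ((t + 1) * ((N + 1) * s))))"
    unfolding atleast_def by (rule tsize_or_le) (use O in auto)
  also have "\<dots> \<le> (Suc (lg N) ^ (t * t) + 1) * (((2 ^ (t * t)) ^ t + 1) * ((t + 1) * ((N + 1) * s)))"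
    by (rule suc_mul_le) (use s1 in \<open>auto simp: length_n_lists\<close>)
  finally show ?thesis .
qed

lemma atleast_depth:
  assumes "\<forall>v<N. tdepth (T v) \<le> d"
  shows "tdepth (atleast t N T) \<le> d + 4"
proof -
  have "tdepth (TOr (map T (filter (\<lambda>v. proj P v = q) [0..<N]))) \<le> Suc d" for P q
    by (rule tdepth_or_le) (use assms in auto)
  then have "tdepth (TAnd (map (\<lambda>q. TOr (map T (filter (\<lambda>v. proj P v = q) [0..<N]))) qs)) \<le> Suc (Suc d)" for P qs
    by (intro tdepth_and_le) auto
  then have "tdepth (TOr (map (\<lambda>qs. TAnd (map (\<lambda>q. TOr (map T (filter (\<lambda>v. proj P v = q) [0..<N]))) qs)) L)) \<le> Suc (Suc (Suc d))" for P L
    by (intro tdepth_or_le) auto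
  then have "tdepth (atleast t N T) \<le> Suc (Suc (Suc (Suc d)))"
    unfolding atleast_def by (intro tdepth_or_le) auto
  then show ?thesis by simp
qed

lemma atleast_ins:
  assumes "\<forall>v<N. tins (T v) \<subseteq> A"
  shows "tins (atleast t N T) \<subseteq> A"
  using assms unfolding atleast_def by auto

lemma pow_le_exp: "(x::nat) ^ m \<le> m ^ m * 3 ^ x"
proof (cases "m = 0")
  case True then show ?thesis by simp
next
  case False
  then have m0: "(0::real) < real m" by simp
  have "real x / real m \<le> exp (real x / real m)"
    using exp_ge_add_one_self[of "real x / real m"] by linarith
  then have "(real x / real m) ^ m \<le> exp (real x / real m) ^ m"
    by (rule power_mono) simp
  also have "\<dots> = exp (real x)" using exp_divide_power_eq[of m "real x"] False by simp
  also have "\<dots> = exp 1 ^ x" using exp_of_nat_mult[of x 1] by simp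
  also have "\<dots> \<le> 3 ^ x" by (rule power_mono) (use exp_le in auto)
  finally have h: "(real x / real m) ^ m \<le> 3 ^ x" .
  have "real (x ^ m) = real m ^ m * (real x / real m) ^ m"
    using m0 by (simp add: power_divide)
  also have "\<dots> \<le> real m ^ m * 3 ^ x" using h by (simp add: mult_left_mono)
  also have "\<dots> = real (m ^ m * 3 ^ x)" by simp
  finally show ?thesis by linarith
qed

lemma lg_pow_bound: "Suc (lg N) ^ m \<le> m ^ m * 16 * (N + 1) ^ 2"
proof -
  have "Suc (lg N) ^ m \<le> m ^ m * 3 ^ Suc (lg N)" by (rule pow_le_exp)
  also have "(3::nat) ^ Suc (lg N) \<le> 4 ^ Suc (lg N)" by (rule power_mono) auto
  also have "(4::nat) ^ Suc (lg N) = 4 * 4 ^ lg N" by simp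
  also have "\<dots> \<le> 4 * (4 * (N + 1) ^ 2)" using lg_le[of N] by simp
  finally show ?thesis by (simp add: mult.assoc mult_left_mono)
qed

definition btree :: "nat \<Rightarrow> ftree" where
  "btree N = TAnd (map (\<lambda>i. TNot (TIn (i * N + i))) [0..<N] @
      concat (map (\<lambda>i. map (\<lambda>j. TOr [TNot (TIn (i * N + j)), TIn (j * N + i)]) [0..<N]) [0..<N]))"

lemma btree_correct: "teval w (btree N) = basic_graph N (Ew N w)"
proof -
  have sq: "Ew N w \<subseteq> {0..<N} \<times> {0..<N}" unfolding Ew_def by auto
  have ir: "irrefl (Ew N w) = (\<forall>i<N. \<not> w ! (i * N + i))" unfolding irrefl_def Ew_def by auto
  have sy: "sym (Ew N w) = (\<forall>i<N. \<forall>j<N. w ! (i * N + j) \<longrightarrow> w ! (j * N + i))"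
    unfolding sym_def Ew_def by auto
  have t: "teval w (btree N) = ((\<forall>i<N. \<not> w ! (i * N + i)) \<and> (\<forall>i<N. \<forall>j<N. \<not> w ! (i * N + j) \<or> w ! (j * N + i)))"
  proof -
    have a: "teval w (TAnd (A @ B)) = (teval w (TAnd A) \<and> teval w (TAnd B))" for A B by auto
    have c: "teval w (TAnd (concat xss)) = (\<forall>xs\<in>set xss. teval w (TAnd xs))" for xss by auto
    have m: "teval w (TAnd (map f [0..<N])) = (\<forall>i<N. teval w (f i))" for f by auto
    have m2: "(\<forall>xs\<in>set (map f [0..<N]). P xs) = (\<forall>i<N. P (f i))" for f and P :: "ftree list \<Rightarrow> bool" by auto
    show ?thesis unfolding btree_def a c m m2 by simp
  qed
  show ?thesis unfolding basic_graph_def t ir sy using sq by blast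
qed

lemma btree_size: "tsize (btree N) \<le> 5 * (N + 1) ^ 2"
proof -
  have "tsize (btree N) \<le> Suc (length (map (\<lambda>i. TNot (TIn (i * N + i))) [0..<N] @
      concat (map (\<lambda>i. map (\<lambda>j. TOr [TNot (TIn (i * N + j)), TIn (j * N + i)]) [0..<N]) [0..<N])) * 4)"
    unfolding btree_def by (rule tsize_and_le) auto
  also have "\<dots> = Suc ((N + N * N) * 4)" by (simp add: length_concat sum_list_triv o_def)
  also have "\<dots> \<le> 5 * (N + 1) ^ 2" by (simp add: power2_eq_square algebra_simps)
  finally show ?thesis .
qed

lemma btree_depth: "tdepth (btree N) \<le> 3"
proof -
  have "tdepth (btree N) \<le> Suc 2" unfolding btree_def
    by (rule tdepth_and_le) (auto simp: fold_max_le)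
  then show ?thesis by simp
qed

lemma btree_ins: "tins (btree N) \<subseteq> {..<N * N}"
  unfolding btree_def using idx_lt by auto

lemma lin_help: "X \<le> Y \<Longrightarrow> 1 \<le> Y \<Longrightarrow> Suc (5 * X + a * Y) \<le> (a + 6) * (Y::nat)"
  by (simp add: add_mult_distrib)

definition circF :: "(nat \<Rightarrow> nat \<Rightarrow> ftree) \<Rightarrow> nat \<Rightarrow> nat \<Rightarrow> gate list" where
  "circF RT n k = (if \<exists>N. N * N = n then circ_of (TAnd [btree (THE N. N * N = n), RT (THE N. N * N = n) k])
      else [GOr []])"

lemma paraAC0_intro:
  fixes R :: "nat \<Rightarrow> (nat \<times> nat) set \<Rightarrow> nat \<Rightarrow> bool"
  assumes F: "computable F"
    and ins: "\<And>N k. tins (RT N k) \<subseteq> {..<N * N}"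
    and dep: "\<And>N k. tdepth (RT N k) \<le> d"
    and siz: "\<And>N k. tsize (RT N k) \<le> F k * (N + 1) ^ 4"
    and sem: "\<And>N k w. length w = N * N \<Longrightarrow> basic_graph N (Ew N w) \<Longrightarrow> teval w (RT N k) = R N (Ew N w) k"
  shows "{(graph_enc N E, k) | N E k. basic_graph N E \<and> R N E k} \<in> paraAC0"
proof -
  let ?Q = "{(graph_enc N E, k) | N E k. basic_graph N E \<and> R N E k}"
  let ?C = "circF RT"
  have cF: "computable (\<lambda>k. F k + 6)" by (intro computable_add F computable_const)
  have main: "wf_circ n (?C n k) \<and> (\<forall>w. length w = n \<longrightarrow> (circ_out w (?C n k) \<longleftrightarrow> (w, k) \<in> ?Q)) \<and>
      circ_size (?C n k) \<le> (F k + 6) * (n + 1) ^ 4 \<and> circ_depth (?C n k) \<le> d + 4" for n k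
  proof (cases "\<exists>N. N * N = n")
    case True
    then obtain N where N: "N * N = n" by blast
    have th: "(THE N. N * N = n) = N" using N sq_inj by blast
    let ?T = "TAnd [btree N, RT N k]"
    have C: "?C n k = circ_of ?T" unfolding circF_def using True th by simp
    have ti: "\<forall>j\<in>tins ?T. j < n" using btree_ins[of N] ins[of N k] N by auto
    note P = circ_of_props[OF ti]
    have out: "circ_out w (?C n k) = ((w, k) \<in> ?Q)" if "length w = n" for w
    proof -
      have l: "length w = N * N" using that N by simp
      have "circ_out w (?C n k) = (basic_graph N (Ew N w) \<and> teval w (RT N k))"
        unfolding C P(2) by (simp add: btree_correct)
      also have "\<dots> = (basic_graph N (Ew N w) \<and> R N (Ew N w) k)" using sem[OF l] by blast
      also have "\<dots> = ((w, k) \<in> ?Q)" using Q_mem[OF l, of k R] by simp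
      finally show ?thesis .
    qed
    have "tsize ?T = Suc (tsize (btree N) + tsize (RT N k))" by simp
    also have "\<dots> \<le> Suc (5 * (N + 1) ^ 2 + F k * (N + 1) ^ 4)" using btree_size[of N] siz[of N k] by simp
    also have "\<dots> \<le> (F k + 6) * (N + 1) ^ 4"
    proof -
      have "(N + 1) ^ 2 \<le> (N + 1) ^ 4" by (rule power_increasing) auto
      moreover have "1 \<le> (N + 1) ^ 4" by simp
      ultimately show ?thesis using lin_help by blast
    qed
    also have "\<dots> \<le> (F k + 6) * (n + 1) ^ 4"
    proof -
      have "N \<le> n" using N by (cases N) auto
      then show ?thesis by (simp add: power_mono)
    qed
    finally have sz: "circ_size (?C n k) \<le> (F k + 6) * (n + 1) ^ 4" unfolding C P(3) .
    have dT: "tdepth ?T \<le> Suc (max 3 d)"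
      by (rule tdepth_and_le) (use btree_depth[of N] dep[of N k] in auto)
    have "circ_depth (?C n k) \<le> tdepth ?T" unfolding C by (rule P(4))
    also note dT
    also have "Suc (max 3 d) \<le> d + 4" by (simp add: max_def)
    finally have dp: "circ_depth (?C n k) \<le> d + 4" .
    show ?thesis using P(1) C out sz dp by simp
  next
    case False
    have C: "?C n k = [GOr []]" unfolding circF_def using False by simp
    have wf: "wf_circ n [GOr []]" by (simp add: wf_circ_def)
    have out: "circ_out w [GOr []] = False" for w by (simp add: circ_out_def circ_vals_def)
    have nq: "(w, k) \<notin> ?Q" if "length w = n" for w
      using Q_len[of w k R] False that by metis
    have sz: "circ_size [GOr []] \<le> (F k + 6) * (n + 1) ^ 4"
    proof -
      have "1 \<le> (F k + 6) * (n + 1) ^ 4" by simp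
      then show ?thesis by (simp add: circ_size_def)
    qed
    have dp: "circ_depth [GOr []] \<le> d + 4" by (simp add: circ_depth_def)
    show ?thesis unfolding C using wf out nq sz dp by simp
  qed
  show ?thesis unfolding paraAC0_def decides_family_def
    apply (rule CollectI)
    apply (rule exI[of _ ?C], rule exI[of _ "\<lambda>k. F k + 6"], rule exI[of _ 4], rule exI[of _ "d + 4"])
    using main cF unfolding circ_size_def by blast
qed

lemma static_in: "{(graph_enc N E, k) | N E k. basic_graph N E \<and> R0 N} \<in> paraAC0"
proof -
  have "{(graph_enc N E, k) | N E k. basic_graph N E \<and> (\<lambda>N E k. R0 N) N E k} \<in> paraAC0"
  proof (rule paraAC0_intro[where RT = "\<lambda>N k. if R0 N then TAnd [] else TOr []" and F = "\<lambda>k. 1" and d = 1])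
    show "computable (\<lambda>k. 1::nat)" by (rule computable_const)
  qed auto
  then show ?thesis by simp
qed

definition badt :: "bool \<Rightarrow> nat \<Rightarrow> nat \<Rightarrow> ftree" where
  "badt b N v = TAnd (map (\<lambda>u. if b then TNot (TIn (v * N + u)) else TIn (v * N + u)) (filter (\<lambda>u. u \<noteq> v) [0..<N]))"

definition DT :: "modop \<Rightarrow> bool \<Rightarrow> nat \<Rightarrow> nat \<Rightarrow> ftree" where
  "DT m b N k = TOr [TNot (TOr (map (badt b N) [0..<N])),
     (if allowed m b \<and> 2 \<le> N then TNot (atleast (2 * k + 1) N (badt b N)) else TOr [])]"

definition FD :: "nat \<Rightarrow> nat" where
  "FD k = 34 * ((2 * k + 1) * (2 * k + 1)) ^ ((2 * k + 1) * (2 * k + 1)) *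
     ((2 ^ ((2 * k + 1) * (2 * k + 1))) ^ (2 * k + 1) + 1) * (2 * k + 1 + 1) + 6"

lemma FD_comp: "computable FD"
  unfolding FD_def
  by (intro computable_add computable_mul computable_pow computable_const computable_id)

lemma badt_sem: "v < N \<Longrightarrow> teval w (badt b N v) = (v \<in> badset b N (Ew N w))"
proof -
  assume v: "v < N"
  have t: "teval w (badt b N v) = (\<forall>u<N. u \<noteq> v \<longrightarrow> (if b then \<not> w ! (v * N + u) else w ! (v * N + u)))"
    unfolding badt_def by (cases b) auto
  have e: "((v, u) \<in> Ew N w) = w ! (v * N + u)" if "u < N" for u
    using v that unfolding Ew_def by simp
  show ?thesis unfolding t badset_def using v e by (cases b) auto
qed

lemma badset_sub: "badset b N E \<subseteq> {..<N}" unfolding badset_def by auto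

lemma DT_sem: "teval w (DT m b N k) =
   (badset b N (Ew N w) = {} \<or> (allowed m b \<and> 2 \<le> N \<and> card (badset b N (Ew N w)) \<le> 2 * k))"
proof -
  let ?B = "badset b N (Ew N w)"
  have e: "{v. v < N \<and> teval w (badt b N v)} = ?B"
  proof (intro set_eqI iffI)
    fix v assume "v \<in> {v. v < N \<and> teval w (badt b N v)}"
    then show "v \<in> ?B" using badt_sem by blast
  next
    fix v assume v: "v \<in> ?B"
    then have "v < N" unfolding badset_def by simp
    then show "v \<in> {v. v < N \<and> teval w (badt b N v)}" using v badt_sem by blast
  qed
  have o1: "teval w (TOr (map (badt b N) [0..<N])) = (\<exists>v<N. teval w (badt b N v))" by auto
  have o: "teval w (TOr (map (badt b N) [0..<N])) = (?B \<noteq> {})"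
    unfolding o1 using e by blast
  have x: "teval w (if allowed m b \<and> 2 \<le> N then TNot (atleast (2 * k + 1) N (badt b N)) else TOr []) =
     (allowed m b \<and> 2 \<le> N \<and> \<not> (2 * k + 1 \<le> card ?B))"
    using atleast_correct[of w "2 * k + 1" N "badt b N"] unfolding e by auto
  have d: "teval w (DT m b N k) = (\<not> teval w (TOr (map (badt b N) [0..<N])) \<or>
     teval w (if allowed m b \<and> 2 \<le> N then TNot (atleast (2 * k + 1) N (badt b N)) else TOr []))"
    unfolding DT_def by simp
  show ?thesis unfolding d o x by linarith
qed

lemma badt_size: "tsize (badt b N v) \<le> 2 * (N + 1)"
proof -
  have "tsize (badt b N v) \<le> Suc (length (map (\<lambda>u. if b then TNot (TIn (v * N + u)) else TIn (v * N + u)) (filter (\<lambda>u. u \<noteq> v) [0..<N])) * 2)"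
    unfolding badt_def by (rule tsize_and_le) auto
  also have "\<dots> \<le> Suc (N * 2)" using length_filter_le[of _ "[0..<N]"] by simp
  finally show ?thesis by simp
qed

lemma badt_depth: "tdepth (badt b N v) \<le> 2"
proof -
  have "tdepth (badt b N v) \<le> Suc 1" unfolding badt_def by (rule tdepth_and_le) auto
  then show ?thesis by simp
qed

lemma badt_ins: "v < N \<Longrightarrow> tins (badt b N v) \<subseteq> {..<N * N}"
  unfolding badt_def using idx_lt by auto

lemma arith_D:
  fixes A P Q T1 MM Bs Z :: nat
  assumes A: "A \<le> (P + 1) * ((Q + 1) * (T1 * (Z * (2 * Z))))"
    and P: "P + 1 \<le> 17 * MM * Z ^ 2" and Bs: "Bs \<le> 2 * Z ^ 2" and Z: "1 \<le> Z"
  shows "Suc (Suc Bs + Suc A) \<le> (34 * MM * (Q + 1) * T1 + 6) * Z ^ 4"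
proof -
  have "A \<le> 17 * MM * Z ^ 2 * ((Q + 1) * (T1 * (Z * (2 * Z))))"
    using A P by (meson le_trans mult_le_mono1)
  also have "\<dots> = (34 * MM * (Q + 1) * T1) * Z ^ 4"
    by (simp add: power2_eq_square power4_eq_xxxx algebra_simps)
  finally have A': "A \<le> (34 * MM * (Q + 1) * T1) * Z ^ 4" .
  have "Z ^ 2 \<le> Z ^ 4" using Z by (intro power_increasing) auto
  moreover have "1 \<le> Z ^ 4" using Z by simp
  ultimately show ?thesis using A' Bs by (simp add: add_mult_distrib)
qed

lemma lin17: "a \<le> M * 16 * X \<Longrightarrow> 1 \<le> M * X \<Longrightarrow> a + 1 \<le> 17 * M * (X::nat)"
proof -
  assume "a \<le> M * 16 * X" "1 \<le> M * X"
  moreover have "M * 16 * X = 16 * (M * X)" "17 * M * X = 17 * (M * X)" by simp_all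
  ultimately show ?thesis by linarith
qed

lemma D_in: "{(graph_enc N E, k) | N E k. basic_graph N E \<and>
     (badset b N E = {} \<or> (allowed m b \<and> 2 \<le> N \<and> card (badset b N E) \<le> 2 * k))} \<in> paraAC0"
proof (rule paraAC0_intro[where RT = "DT m b" and F = FD and d = 8])
  show "computable FD" by (rule FD_comp)
next
  fix N k
  show "tins (DT m b N k) \<subseteq> {..<N * N}"
  proof -
    have "\<forall>v<N. tins (badt b N v) \<subseteq> {..<N * N}" using badt_ins by blast
    then show ?thesis unfolding DT_def using atleast_ins[of N "badt b N" "{..<N * N}" "2 * k + 1"]
      by auto
  qed
next
  fix N k
  have a: "tdepth (TNot (TOr (map (badt b N) [0..<N]))) \<le> 7"
  proof -
    have "tdepth (TOr (map (badt b N) [0..<N])) \<le> Suc 2"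
      by (rule tdepth_or_le) (use badt_depth in auto)
    then show ?thesis by simp
  qed
  have b: "tdepth (if allowed m b \<and> 2 \<le> N then TNot (atleast (2 * k + 1) N (badt b N)) else TOr []) \<le> 7"
  proof -
    have "tdepth (atleast (2 * k + 1) N (badt b N)) \<le> 2 + 4"
      by (rule atleast_depth) (use badt_depth in auto)
    then show ?thesis by auto
  qed
  show "tdepth (DT m b N k) \<le> 8"
  proof -
    have "tdepth (DT m b N k) \<le> Suc 7" unfolding DT_def by (rule tdepth_or_le) (use a b in auto)
    then show ?thesis by simp
  qed
next
  fix N k
  let ?t = "2 * k + 1 :: nat"
  let ?m = "?t * ?t"
  let ?X = "if allowed m b \<and> 2 \<le> N then TNot (atleast ?t N (badt b N)) else TOr []"
  have s: "\<forall>v<N. tsize (badt b N v) \<le> 2 * (N + 1)" using badt_size by blast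
  have AL: "tsize (atleast ?t N (badt b N)) \<le> (Suc (lg N) ^ ?m + 1) * (((2 ^ ?m) ^ ?t + 1) * ((?t + 1) * ((N + 1) * (2 * (N + 1)))))"
    by (rule atleast_size[OF s]) simp
  have X: "tsize ?X \<le> Suc ((Suc (lg N) ^ ?m + 1) * (((2 ^ ?m) ^ ?t + 1) * ((?t + 1) * ((N + 1) * (2 * (N + 1))))))"
    using AL by auto
  have Bs: "tsize (TOr (map (badt b N) [0..<N])) \<le> 2 * (N + 1) ^ 2"
  proof -
    have "tsize (TOr (map (badt b N) [0..<N])) \<le> Suc (length (map (badt b N) [0..<N]) * (2 * (N + 1)))"
      by (rule tsize_or_le) (use s in auto)
    also have "\<dots> \<le> 2 * (N + 1) ^ 2" by (simp add: power2_eq_square algebra_simps)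
    finally show ?thesis .
  qed
  have P: "Suc (lg N) ^ ?m + 1 \<le> 17 * (?m ^ ?m) * (N + 1) ^ 2"
  proof -
    have "Suc (lg N) ^ ?m \<le> ?m ^ ?m * 16 * (N + 1) ^ 2" by (rule lg_pow_bound)
    moreover have "1 \<le> ?m ^ ?m * (N + 1) ^ 2"
    proof -
      have m1: "1 \<le> ?m ^ ?m" by (rule one_le_power) simp
      have n1: "1 \<le> (N + 1) ^ 2" by simp
      show ?thesis using mult_le_mono[OF m1 n1] by simp
    qed
    ultimately show ?thesis by (rule lin17)
  qed
  have "tsize (DT m b N k) = Suc (Suc (tsize (TOr (map (badt b N) [0..<N]))) + tsize ?X)"
    unfolding DT_def by simp
  also have "\<dots> \<le> Suc (Suc (tsize (TOr (map (badt b N) [0..<N]))) +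
      Suc ((Suc (lg N) ^ ?m + 1) * (((2 ^ ?m) ^ ?t + 1) * ((?t + 1) * ((N + 1) * (2 * (N + 1)))))))"
    using X by simp
  also have "\<dots> \<le> (34 * (?m ^ ?m) * ((2 ^ ?m) ^ ?t + 1) * (?t + 1) + 6) * (N + 1) ^ 4"
    by (rule arith_D[OF order_refl P Bs]) simp
  also have "\<dots> = FD k * (N + 1) ^ 4" unfolding FD_def by simp
  finally show "tsize (DT m b N k) \<le> FD k * (N + 1) ^ 4" .
next
  fix N k w
  show "teval w (DT m b N k) = (badset b N (Ew N w) = {} \<or> (allowed m b \<and> 2 \<le> N \<and> card (badset b N (Ew N w)) \<le> 2 * k))"
    by (rule DT_sem)
qed

theorem lemma3p5:
  shows "\<forall>m \<in> {Del, Add, Edit}. RM_basic_ae m \<subseteq> paraAC0 \<and> paraAC0 \<subseteq> paraAC0up"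
proof (intro ballI conjI)
  fix m :: modop
  show "RM_basic_ae m \<subseteq> paraAC0"
  proof
    fix Q assume "Q \<in> RM_basic_ae m"
    then obtain \<phi> where Q: "Q = RM_basic m \<phi>" and ae: "ae_sentence \<phi>"
      unfolding RM_basic_ae_def by blast
    from ae_classify[OF ae] show "Q \<in> paraAC0"
    proof
      assume "\<exists>R0. \<forall>N E. basic_graph N E \<longrightarrow> (models N E \<phi> \<longleftrightarrow> R0 N)"
      then obtain R0 where R0: "\<forall>N E. basic_graph N E \<longrightarrow> (models N E \<phi> \<longleftrightarrow> R0 N)" by blast
      show ?thesis unfolding Q RM_static[OF R0] by (rule static_in)
    next
      assume "\<exists>b. \<forall>N E. basic_graph N E \<longrightarrow> (models N E \<phi> \<longleftrightarrow> goodall b N E)"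
      then obtain b where b: "\<forall>N E. basic_graph N E \<longrightarrow> (models N E \<phi> \<longleftrightarrow> goodall b N E)" by blast
      show ?thesis unfolding Q RM_D[OF b] by (rule D_in)
    qed
  qed
  show "paraAC0 \<subseteq> paraAC0up"
  proof
    fix Q assume "Q \<in> paraAC0"
    then obtain C f c d where h: "computable f" "decides_family C Q"
      "\<forall>n k. circ_size (C n k) \<le> f k * (n + 1) ^ c \<and> circ_depth (C n k) \<le> d"
      unfolding paraAC0_def by blast
    show "Q \<in> paraAC0up" unfolding paraAC0up_def
      using h computable_const[of d] by blast
  qed
qed

end
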